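(* Let $\sigma,\tau,\bar\sigma,\bar\tau$ satisfy the Standing Hypothesis, and let $m\ge 1$, $n\ge 2$ and $0\le x\le\min\{m,n-1\}$ be integers. Then $$\{\sigma,m,n,\tau\,|\,\bar\sigma,x,\bar\tau\}-\{\sigma,m+1,n-1,\tau\,|\,\bar\sigma,x,\bar\tau\}=A-B,$$ where $$A=\begin{cases}\{\sigma,m,n,\tau\,|\,\bar\sigma,x+1,\bar\tau\}&\text{if }x<m,\\ -\{\sigma\backslash\sigma_s,m+\sigma_s,n,\tau\,|\,\bar\sigma\backslash\bar\sigma_s,m+1,\bar\tau\}&\text{if }x=m,\end{cases}$$ $$B=\begin{cases}\{\sigma,m+1,n-1,\tau\,|\,\bar\sigma,x+1,\bar\tau\}&\text{if }x<n-1,\\ -\{\sigma,m+1,n-1+\tau_1,\tau\backslash\tau_1\,|\,\bar\sigma,n,\bar\tau\backslash\bar\tau_1\}&\text{if }x=n-1.\end{cases}$$ If $s=0$ the term containing $\sigma\backslash\sigma_s$ is replaced by $0$; if $t=0$ the term containing $\tau\backslash\tau_1$ is replaced by $0$.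
   Context: Skew diagrams: for partitions $\mu\subseteq\lambda$, the skew diagram $\lambda/\mu$ is the set of boxes $(i,j)$ (row $i$, column $j$) with $\mu_i<j\le\lambda_i$; two skew diagrams are identified if one is obtained from the other by deleting empty rows or empty columns. The skew Schur function is $s_{\lambda/\mu}=\sum_T x^{c(T)}$, summed over semistandard Young tableaux $T$ of shape $\lambda/\mu$ (positive integer fillings, rows weakly increasing left to right, columns strictly increasing top to bottom), where $x^{c(T)}=\prod_i x_i^{\#\{i\text{'s in }T\}}$. Overlap notation: for integer sequences $\alpha=(\alpha_1,\dots,\alpha_L)$ with all $\alpha_i\ge1$ and $\beta=(\beta_1,\dots,\beta_{L-1})$ with $0\le\beta_i\le\min\{\alpha_i,\alpha_{i+1}\}$, $(\alpha\,|\,\beta)$ denotes the skew diagram $\lambda/\mu$ with $L$ nonempty rows such that $\lambda_i-\mu_i=\alpha_i$ for all $i$ and $\lambda_{i+1}-\mu_i=\beta_i$ for $1\le i<L$ (row $i$ has $\alpha_i$ boxes and rows $i,i+1$ share exactly $\beta_i$ columns, row $i+1$ lying weakly to the left); $\{\alpha\,|\,\beta\}$ denotes its skew Schur function $s_{\lambda/\mu}$. Commas inside $\{\cdot|\cdot\}$ denote concatenation of sequences; $a^j$ denotes $j$ consecutive copies of $a$ (empty if $j=0$). Standing Hypothesis: $\sigma=(\sigma_1,\dots,\sigma_s)$ and $\tau=(\tau_1,\dots,\tau_t)$ are compositions (sequences of positive integers) with $s,t\ge0$; $\bar\sigma=(\bar\sigma_1,\dots,\bar\sigma_s)$ and $\bar\tau=(\bar\tau_1,\dots,\bar\tau_t)$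 are sequences of non-negative integers; $\bar\sigma_s=1$ if $s>0$; $\bar\tau_1=1$ if $t>0$; $\bar\sigma_i\le\min\{\sigma_i,\sigma_{i+1}\}$ for $1\le i<s$, and $\bar\tau_i\le\min\{\tau_i,\tau_{i-1}\}$ for $1<i\le t$. (Thus in $\{\sigma,m,n,\tau\,|\,\bar\sigma,x,\bar\tau\}$, $\bar\sigma_s$ is the overlap of row $\sigma_s$ with row $m$, $x$ that of rows $m,n$, and $\bar\tau_1$ that of row $n$ with row $\tau_1$.) $\sigma\backslash\sigma_s$ denotes $\sigma$ with its last part removed, $\tau\backslash\tau_1$ denotes $\tau$ with its first part removed, and similarly $\bar\sigma\backslash\bar\sigma_s$, $\bar\tau\backslash\bar\tau_1$. When $s=0$ (resp. $t=0$), $\sigma,\bar\sigma$ (resp. $\tau,\bar\tau$) are simply absent. *)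

theory Defs
  imports Main
begin

text \<open>Skew diagram lambda/mu (partitions given as lists of equal length, row i is 0-based,
columns are 1-based): boxes (i,j) with mu_i < j <= lambda_i.\<close>
definition skew_boxes :: "nat list \<Rightarrow> nat list \<Rightarrow> (nat \<times> nat) set" where
  "skew_boxes lam mu = {(i, j). i < length lam \<and> mu ! i < j \<and> j \<le> lam ! i}"

definition ssyt :: "nat list \<Rightarrow> nat list \<Rightarrow> (nat \<times> nat \<Rightarrow> nat) \<Rightarrow> bool" where
  "ssyt lam mu T \<longleftrightarrow>
     (\<forall>b. b \<notin> skew_boxes lam mu \<longrightarrow> T b = 0) \<and>
     (\<forall>b\<in>skew_boxes lam mu. 1 \<le> T b) \<and>
     (\<forall>i j j'. (i, j) \<in> skew_boxes lam mu \<and> (i, j') \<in> skew_boxes lam mu \<and> j < j'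
                 \<longrightarrow> T (i, j) \<le> T (i, j')) \<and>
     (\<forall>i i' j. (i, j) \<in> skew_boxes lam mu \<and> (i', j) \<in> skew_boxes lam mu \<and> i < i'
                 \<longrightarrow> T (i, j) < T (i', j))"

definition content :: "nat list \<Rightarrow> nat list \<Rightarrow> (nat \<times> nat \<Rightarrow> nat) \<Rightarrow> nat \<Rightarrow> nat" where
  "content lam mu T k = card {b \<in> skew_boxes lam mu. T b = k}"

text \<open>The skew Schur function s_{lambda/mu}, represented by its coefficient function:
monomial x^c (c an exponent vector) maps to the number of SSYT T with c(T) = c.\<close>
definition skew_schur :: "nat list \<Rightarrow> nat list \<Rightarrow> (nat \<Rightarrow> nat) \<Rightarrow> int" where
  "skew_schur lam mu c = int (card {T. ssyt lam mu T \<and> content lam mu T = c})"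

text \<open>Row i (0-based) occupies integer columns
[a_i, a_i + alpha_i) with a_0 = 0 and a_{i+1} + alpha_{i+1} = a_i + beta_i.
lambda, mu are obtained by shifting so that the last row starts at column 1.\<close>
definition ov_start :: "nat list \<Rightarrow> nat list \<Rightarrow> nat \<Rightarrow> int" where
  "ov_start \<alpha> \<beta> i = (\<Sum>k<i. int (\<beta> ! k) - int (\<alpha> ! Suc k))"

definition ov_lambda :: "nat list \<Rightarrow> nat list \<Rightarrow> nat list" where
  "ov_lambda \<alpha> \<beta> = map (\<lambda>i. nat (ov_start \<alpha> \<beta> i + int (\<alpha> ! i) - ov_start \<alpha> \<beta> (length \<alpha> - 1)))
                       [0..<length \<alpha>]"

definition ov_mu :: "nat list \<Rightarrow> nat list \<Rightarrow> nat list" where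
  "ov_mu \<alpha> \<beta> = map (\<lambda>i. nat (ov_start \<alpha> \<beta> i - ov_start \<alpha> \<beta> (length \<alpha> - 1)))
                       [0..<length \<alpha>]"

definition ov_schur :: "nat list \<Rightarrow> nat list \<Rightarrow> (nat \<Rightarrow> nat) \<Rightarrow> int" where
  "ov_schur \<alpha> \<beta> = skew_schur (ov_lambda \<alpha> \<beta>) (ov_mu \<alpha> \<beta>)"

definition standing_hyp :: "nat list \<Rightarrow> nat list \<Rightarrow> nat list \<Rightarrow> nat list \<Rightarrow> bool" where
  "standing_hyp \<sigma> \<tau> \<sigma>b \<tau>b \<longleftrightarrow>
     (\<forall>a\<in>set \<sigma>. 1 \<le> a) \<and> (\<forall>a\<in>set \<tau>. 1 \<le> a) \<and>
     length \<sigma>b = length \<sigma> \<and> length \<tau>b = length \<tau> \<and>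
     (\<sigma> \<noteq> [] \<longrightarrow> last \<sigma>b = 1) \<and> (\<tau> \<noteq> [] \<longrightarrow> hd \<tau>b = 1) \<and>
     (\<forall>i. Suc i < length \<sigma> \<longrightarrow> \<sigma>b ! i \<le> min (\<sigma> ! i) (\<sigma> ! Suc i)) \<and>
     (\<forall>i. 0 < i \<and> i < length \<tau> \<longrightarrow> \<tau>b ! i \<le> min (\<tau> ! i) (\<tau> ! (i - 1)))"

end

theory Submission
  imports Defs "HOL-Library.Multiset"
begin

definition rowok :: "nat \<Rightarrow> nat list \<Rightarrow> bool" where
 "rowok k w \<longleftrightarrow> length w = k \<and> sorted w \<and> (\<forall>v\<in>set w. 0 < v)"
definition rel :: "nat \<Rightarrow> nat list \<Rightarrow> nat list \<Rightarrow> bool" where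
 "rel y u v \<longleftrightarrow> (\<forall>k<y. u!k < v!(k + length v - y))"

definition fstbad :: "nat \<Rightarrow> (nat \<Rightarrow> bool) \<Rightarrow> nat" where
 "fstbad y C = (LEAST k. k = y \<or> (k < y \<and> C k))"

lemma fstbad_le: "fstbad y C \<le> y"
  unfolding fstbad_def by (rule Least_le) simp

lemma fstbad_lt: "fstbad y C < y \<Longrightarrow> C (fstbad y C)"
proof -
  assume a: "fstbad y C < y"
  have "(\<lambda>k. k = y \<or> (k < y \<and> C k)) (fstbad y C)"
    unfolding fstbad_def by (rule LeastI[of _ y]) simp
  with a show ?thesis by auto
qed

lemma fstbad_min: "k < fstbad y C \<Longrightarrow> \<not> C k"
proof -
  assume a: "k < fstbad y C"
  have "k \<le> y" using a fstbad_le[of y C] by simp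
  have "\<not> (k = y \<or> (k < y \<and> C k))"
    using a unfolding fstbad_def by (rule not_less_Least)
  then show ?thesis using a fstbad_le[of y C] by auto
qed

lemma fstbad_eq: "k \<le> y \<Longrightarrow> (k < y \<Longrightarrow> C k) \<Longrightarrow> (\<And>j. j < k \<Longrightarrow> \<not> C j) \<Longrightarrow> fstbad y C = k"
  unfolding fstbad_def
  by (rule Least_equality) (auto simp: not_less[symmetric])

lemma sorted_take_drop_app:
  assumes "sorted xs" "sorted ys" "a \<le> length xs"
    and "0 < a \<Longrightarrow> b < length ys \<Longrightarrow> xs!(a-1) \<le> ys!b"
  shows "sorted (take a xs @ drop b ys)"
proof -
  have "\<forall>x\<in>set (take a xs). \<forall>z\<in>set (drop b ys). x \<le> z"
  proof (intro ballI)
    fix x z assume x: "x \<in> set (take a xs)" and z: "z \<in> set (drop b ys)"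
    from x obtain i where i: "i < length (take a xs)" "x = take a xs ! i" by (auto simp: in_set_conv_nth)
    from z obtain j where j: "j < length (drop b ys)" "z = drop b ys ! j" by (auto simp: in_set_conv_nth)
    have "x = xs!i" "i < a" using i assms(3) by auto
    have "z = ys!(b+j)" "b + j < length ys" using j by auto
    have "xs!i \<le> xs!(a-1)" using sorted_nth_mono[OF assms(1), of i "a-1"] \<open>i<a\<close> assms(3) by auto
    moreover have "xs!(a-1) \<le> ys!b" using assms(4) \<open>i<a\<close> \<open>b+j<length ys\<close> by auto
    moreover have "ys!b \<le> ys!(b+j)" using sorted_nth_mono[OF assms(2), of b "b+j"] \<open>b+j<length ys\<close> by auto
    ultimately show "x \<le> z" using \<open>x = xs!i\<close> \<open>z = ys!(b+j)\<close> by simp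
  qed
  then show ?thesis using assms(1,2) by (simp add: sorted_append sorted_wrt_take sorted_wrt_drop)
qed

definition phi :: "nat \<Rightarrow> nat \<Rightarrow> nat list \<times> nat list \<Rightarrow> nat list \<times> nat list" where
  "phi y d PQ = (let P = fst PQ; Q = snd PQ; k = fstbad y (\<lambda>k. Q!(k+d) \<le> P!k) in
     (take (k+d+1) Q @ drop k P, take k P @ drop (k+d+1) Q))"

definition psi :: "nat \<Rightarrow> nat list \<times> nat list \<Rightarrow> nat list \<times> nat list" where
  "psi d PQ = (let P = fst PQ; Q = snd PQ; k = fstbad (length Q) (\<lambda>k. P!(k+d) \<le> Q!k) in
     (take k Q @ drop (k+d+1) P, take (k+d+1) P @ drop k Q))"

definition LA :: "nat \<Rightarrow> nat \<Rightarrow> nat \<Rightarrow> (nat list \<times> nat list) set" where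
  "LA m n y = {(P,Q). sorted P \<and> sorted Q \<and> length P = m \<and> length Q = n \<and> \<not> rel y P Q}"
definition LB :: "nat \<Rightarrow> nat \<Rightarrow> (nat list \<times> nat list) set" where
  "LB p q = {(P,Q). sorted P \<and> sorted Q \<and> length P = p \<and> length Q = q}"

lemma phi_props:
  assumes "1 \<le> y" "y \<le> m" "y \<le> n" "(P,Q) \<in> LA m n y"
  shows "phi y (n-y) (P,Q) \<in> LB (m+n-y+1) (y-1) \<and>
         psi (n-y) (phi y (n-y) (P,Q)) = (P,Q) \<and>
         mset (fst (phi y (n-y) (P,Q))) + mset (snd (phi y (n-y) (P,Q))) = mset P + mset Q \<and>
         last (fst (phi y (n-y) (P,Q))) = last P \<and> hd (fst (phi y (n-y) (P,Q))) = hd Q"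
proof -
  define d where "d = n - y"
  define k where "k = fstbad y (\<lambda>k. Q!(k+d) \<le> P!k)"
  have sP: "sorted P" and sQ: "sorted Q" and lP: "length P = m" and lQ: "length Q = n"
    and nr: "\<not> rel y P Q" using assms(4) by (auto simp: LA_def)
  from nr obtain j where j0: "j < y" "\<not> P!j < Q!(j + length Q - y)" unfolding rel_def by auto
  have j: "j < y" "Q!(j+d) \<le> P!j" using j0 lQ assms unfolding d_def by (auto simp: not_less add.assoc)
  have kle: "k \<le> y" unfolding k_def by (rule fstbad_le)
  have kmin: "\<And>i. i < k \<Longrightarrow> P!i < Q!(i+d)" using fstbad_min unfolding k_def
    by (metis not_le)
  have ky: "k < y"
  proof (rule ccontr)
    assume "\<not> k < y" then have "k = y" using kle by simp
    then show False using kmin[of j] j by simp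
  qed
  have Ck: "Q!(k+d) \<le> P!k" using fstbad_lt[of y "(\<lambda>k. Q!(k+d) \<le> P!k)"] ky unfolding k_def by simp
  define P' where "P' = take (k+d+1) Q @ drop k P"
  define Q' where "Q' = take k P @ drop (k+d+1) Q"
  have ph: "phi y d (P,Q) = (P',Q')" unfolding phi_def P'_def Q'_def k_def by (simp add: Let_def)
  have lP': "length P' = m+n-y+1" unfolding P'_def using ky lP lQ assms d_def by auto
  have lQ': "length Q' = y-1" unfolding Q'_def using ky lP lQ assms d_def by auto
  have sP': "sorted P'" unfolding P'_def
    by (rule sorted_take_drop_app[OF sQ sP]) (use ky lQ lP assms d_def Ck in auto)
  have sQ': "sorted Q'" unfolding Q'_def
  proof (rule sorted_take_drop_app[OF sP sQ])
    show "k \<le> length P" using ky lP assms by simp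
    assume "0 < k" "k+d+1 < length Q"
    have "P!(k-1) < Q!(k-1+d)" using kmin[of "k-1"] \<open>0<k\<close> by simp
    also have "Q!(k-1+d) \<le> Q!(k+d+1)" using sorted_nth_mono[OF sQ] \<open>k+d+1 < length Q\<close> by simp
    finally show "P!(k-1) \<le> Q!(k+d+1)" by simp
  qed
  have lenQ'2: "length Q' = y - 1" by (rule lQ')
  have kk: "fstbad (length Q') (\<lambda>i. P'!(i+d) \<le> Q'!i) = k"
  proof (rule fstbad_eq)
    show "k \<le> length Q'" using lQ' ky by simp
  next
    assume "k < length Q'"
    then have "k+d+1 < n" using lQ' d_def assms by simp
    have "P'!(k+d) = Q!(k+d)" unfolding P'_def using ky lQ d_def assms by (simp add: nth_append)
    moreover have "Q'!k = Q!(k+d+1)" unfolding Q'_def using ky lP lQ d_def assms \<open>k+d+1<n\<close>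
      by (simp add: nth_append)
    moreover have "Q!(k+d) \<le> Q!(k+d+1)" using sorted_nth_mono[OF sQ] \<open>k+d+1<n\<close> lQ by simp
    ultimately show "P'!(k+d) \<le> Q'!k" by simp
  next
    fix i assume "i < k"
    have ii: "i + d < length (take (k+d+1) Q)" using ky lQ d_def assms \<open>i<k\<close> by simp
    have "P'!(i+d) = Q!(i+d)" unfolding P'_def nth_append using ii by simp
    moreover have "Q'!i = P!i" unfolding Q'_def using ky lP assms \<open>i<k\<close> by (simp add: nth_append)
    ultimately show "\<not> P'!(i+d) \<le> Q'!i" using kmin[OF \<open>i<k\<close>] by simp
  qed
  have lt1: "length (take k Q') = k" using lQ' ky by simp
  have ps: "psi d (P',Q') = (P,Q)"
  proof -
    have "take k Q' = take k P" unfolding Q'_def using ky lP assms by simp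
    moreover have "drop (k+d+1) P' = drop k P" unfolding P'_def using ky lQ d_def assms by simp
    moreover have "take (k+d+1) P' = take (k+d+1) Q" unfolding P'_def using ky lQ d_def assms by simp
    moreover have "drop k Q' = drop (k+d+1) Q" unfolding Q'_def using ky lP assms by simp
    ultimately show ?thesis unfolding psi_def using kk by simp
  qed
  have ms: "mset P' + mset Q' = mset P + mset Q"
  proof -
    have "mset P' + mset Q' = (mset (take (k+d+1) Q) + mset (drop (k+d+1) Q)) + (mset (take k P) + mset (drop k P))"
      unfolding P'_def Q'_def by (simp add: ac_simps)
    also have "\<dots> = mset Q + mset P" by (simp flip: mset_append)
    finally show ?thesis by (simp add: ac_simps)
  qed
  have la: "last P' = last P" unfolding P'_def using ky lP assms by simp
  have "Q \<noteq> []" using lQ assms by auto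
  then have hh: "hd P' = hd Q" unfolding P'_def using ky lQ d_def assms by (simp add: hd_append hd_take)
  show ?thesis using ph ps ms la hh sP' sQ' lP' lQ' unfolding d_def LB_def by simp
qed

lemma psi_props:
  assumes "1 \<le> y" "y \<le> m" "y \<le> n" "(P',Q') \<in> LB (m+n-y+1) (y-1)"
  shows "psi (n-y) (P',Q') \<in> LA m n y \<and> phi y (n-y) (psi (n-y) (P',Q')) = (P',Q')"
proof -
  define d where "d = n - y"
  define k where "k = fstbad (length Q') (\<lambda>i. P'!(i+d) \<le> Q'!i)"
  have sP': "sorted P'" and sQ': "sorted Q'" and lP': "length P' = m+d+1" and lQ': "length Q' = y-1"
    using assms unfolding LB_def d_def by auto
  have kle: "k \<le> y - 1" unfolding k_def using fstbad_le lQ' by metis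
  have kmin: "\<And>i. i < k \<Longrightarrow> Q'!i < P'!(i+d)" using fstbad_min unfolding k_def by (metis not_le)
  have Ck: "k < y - 1 \<Longrightarrow> P'!(k+d) \<le> Q'!k" using fstbad_lt[of "length Q'" "(\<lambda>i. P'!(i+d) \<le> Q'!i)"] lQ'
    unfolding k_def by simp
  define P where "P = take k Q' @ drop (k+d+1) P'"
  define Q where "Q = take (k+d+1) P' @ drop k Q'"
  have ps: "psi d (P',Q') = (P,Q)" unfolding psi_def P_def Q_def k_def by (simp add: Let_def)
  have km: "k < m" using kle assms by simp
  have lP: "length P = m" unfolding P_def using kle lQ' lP' km by simp
  have lQ: "length Q = n" unfolding Q_def using kle lQ' lP' km assms d_def by simp
  have sP: "sorted P" unfolding P_def
  proof (rule sorted_take_drop_app[OF sQ' sP'])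
    show "k \<le> length Q'" using kle lQ' by simp
    assume "0 < k" "k+d+1 < length P'"
    have "Q'!(k-1) < P'!(k-1+d)" using kmin[of "k-1"] \<open>0<k\<close> by simp
    also have "P'!(k-1+d) \<le> P'!(k+d+1)" using sorted_nth_mono[OF sP'] \<open>k+d+1 < length P'\<close> by simp
    finally show "Q'!(k-1) \<le> P'!(k+d+1)" by simp
  qed
  have sQ: "sorted Q" unfolding Q_def
    by (rule sorted_take_drop_app[OF sP' sQ']) (use kle lP' lQ' km Ck in auto)
  have Pk: "P!k = P'!(k+d+1)" unfolding P_def using kle lQ' km lP' by (simp add: nth_append)
  have Qk: "Q!(k+d) = P'!(k+d)" unfolding Q_def using kle lQ' km lP' by (simp add: nth_append)
  have CPk: "Q!(k+d) \<le> P!k" using Pk Qk sorted_nth_mono[OF sP', of "k+d" "k+d+1"] lP' km by simp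
  have nr: "\<not> rel y P Q" unfolding rel_def using lQ CPk kle assms d_def
    by (auto simp: not_less intro!: exI[of _ k])
  have kk: "fstbad y (\<lambda>i. Q!(i+d) \<le> P!i) = k"
  proof (rule fstbad_eq)
    show "k \<le> y" using kle by simp
    show "k < y \<Longrightarrow> Q!(k+d) \<le> P!k" by (rule CPk)
    fix i assume "i < k"
    have "P!i = Q'!i" unfolding P_def using kle lQ' \<open>i<k\<close> by (simp add: nth_append)
    moreover have "Q!(i+d) = P'!(i+d)" unfolding Q_def using kle lQ' km lP' \<open>i<k\<close> by (simp add: nth_append)
    ultimately show "\<not> Q!(i+d) \<le> P!i" using kmin[OF \<open>i<k\<close>] by simp
  qed
  have ph: "phi y d (P,Q) = (P',Q')"
  proof -
    have "take (k+d+1) Q = take (k+d+1) P'" unfolding Q_def using kle lP' km by simp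
    moreover have "drop k P = drop (k+d+1) P'" unfolding P_def using kle lQ' by simp
    moreover have "take k P = take k Q'" unfolding P_def using kle lQ' by simp
    moreover have "drop (k+d+1) Q = drop k Q'" unfolding Q_def using kle lP' km by simp
    ultimately show ?thesis unfolding phi_def using kk by simp
  qed
  show ?thesis using ps ph sP sQ lP lQ nr unfolding LA_def d_def by simp
qed

lemma lgv_bij:
  assumes "1 \<le> y" "y \<le> m" "y \<le> n"
  shows "bij_betw (phi y (n-y)) (LA m n y) (LB (m+n-y+1) (y-1))"
proof (rule bij_betw_byWitness[where f'="psi (n-y)"])
  show "\<forall>a\<in>LA m n y. psi (n - y) (phi y (n - y) a) = a" using phi_props[OF assms] by auto
  show "\<forall>a'\<in>LB (m + n - y + 1) (y - 1). phi y (n - y) (psi (n - y) a') = a'" using psi_props[OF assms] by auto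
  show "phi y (n - y) ` LA m n y \<subseteq> LB (m + n - y + 1) (y - 1)" using phi_props[OF assms] by auto
  show "psi (n - y) ` LB (m + n - y + 1) (y - 1) \<subseteq> LA m n y" using psi_props[OF assms] by auto
qed

lemma bij_restrict:
  assumes "bij_betw f A B" "\<And>a. a \<in> A \<Longrightarrow> R' (f a) = R a"
  shows "bij_betw f {a\<in>A. R a} {b\<in>B. R' b}"
proof -
  have "inj_on f {a\<in>A. R a}" using assms(1) unfolding bij_betw_def by (auto intro: inj_on_subset)
  moreover have "f ` {a\<in>A. R a} = {b\<in>B. R' b}"
  proof
    show "f ` {a\<in>A. R a} \<subseteq> {b\<in>B. R' b}" using assms unfolding bij_betw_def by auto
    show "{b\<in>B. R' b} \<subseteq> f ` {a\<in>A. R a}"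
    proof
      fix b assume "b \<in> {b\<in>B. R' b}"
      then obtain a where "a \<in> A" "b = f a" "R' b" using assms(1) unfolding bij_betw_def by auto
      then show "b \<in> f ` {a\<in>A. R a}" using assms(2) by auto
    qed
  qed
  ultimately show ?thesis unfolding bij_betw_def by simp
qed

lemma lift4:
  assumes bij: "\<And>p q. bij_betw (f p q) (A p q) (B p q)"
    and XY: "\<And>p q u v. (u,v) \<in> A p q \<Longrightarrow> X p u v q = Y p (fst (f p q (u,v))) (snd (f p q (u,v))) q"
  shows "bij_betw (\<lambda>(p,u,v,q). (p, fst (f p q (u,v)), snd (f p q (u,v)), q))
           {(p,u,v,q). (u,v) \<in> A p q \<and> X p u v q} {(p,u,v,q). (u,v) \<in> B p q \<and> Y p u v q}"
  unfolding bij_betw_def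
proof (intro conjI)
  show "inj_on (\<lambda>(p,u,v,q). (p, fst (f p q (u,v)), snd (f p q (u,v)), q)) {(p,u,v,q). (u,v) \<in> A p q \<and> X p u v q}"
  proof (rule inj_onI, clarsimp)
    fix p u v q u' v'
    assume a: "(u,v) \<in> A p q" "(u',v') \<in> A p q"
      and e1: "fst (f p q (u,v)) = fst (f p q (u',v'))" and e2: "snd (f p q (u,v)) = snd (f p q (u',v'))"
    have "f p q (u,v) = f p q (u',v')" using e1 e2 by (simp add: prod_eq_iff)
    then show "u = u' \<and> v = v'" using bij[of p q] a unfolding bij_betw_def inj_on_def by blast
  qed
  show "(\<lambda>(p,u,v,q). (p, fst (f p q (u,v)), snd (f p q (u,v)), q)) ` {(p,u,v,q). (u,v) \<in> A p q \<and> X p u v q}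
      = {(p,u,v,q). (u,v) \<in> B p q \<and> Y p u v q}"
  proof
    show "(\<lambda>(p,u,v,q). (p, fst (f p q (u,v)), snd (f p q (u,v)), q)) ` {(p,u,v,q). (u,v) \<in> A p q \<and> X p u v q}
      \<subseteq> {(p,u,v,q). (u,v) \<in> B p q \<and> Y p u v q}"
    proof
      fix z assume z: "z \<in> (\<lambda>(p,u,v,q). (p, fst (f p q (u,v)), snd (f p q (u,v)), q)) ` {(p,u,v,q). (u,v) \<in> A p q \<and> X p u v q}"
      then obtain p u v q where a: "(u,v) \<in> A p q" "X p u v q"
        and zz: "z = (p, fst (f p q (u,v)), snd (f p q (u,v)), q)" by auto
      have "f p q (u,v) \<in> B p q" using bij[of p q] a unfolding bij_betw_def by auto
      then show "z \<in> {(p,u,v,q). (u,v) \<in> B p q \<and> Y p u v q}"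
        using XY[OF a(1)] a(2) zz by simp
    qed
    show "{(p,u,v,q). (u,v) \<in> B p q \<and> Y p u v q} \<subseteq>
      (\<lambda>(p,u,v,q). (p, fst (f p q (u,v)), snd (f p q (u,v)), q)) ` {(p,u,v,q). (u,v) \<in> A p q \<and> X p u v q}"
    proof
      fix z assume z: "z \<in> {(p,u,v,q). (u,v) \<in> B p q \<and> Y p u v q}"
      obtain p u' v' q where zz: "z = (p,u',v',q)" by (cases z) blast
      have b: "(u',v') \<in> B p q" "Y p u' v' q" using z zz by auto
      then obtain uv where uv: "uv \<in> A p q" "f p q uv = (u',v')" using bij[of p q] unfolding bij_betw_def by force
      obtain u v where uvd: "uv = (u,v)" by force
      have X: "X p u v q" using XY[of u v p q] uv b uvd by simp
      have "(p,u,v,q) \<in> {(p,u,v,q). (u,v) \<in> A p q \<and> X p u v q}" using X uv uvd by simp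
      moreover have "z = (\<lambda>(p,u,v,q). (p, fst (f p q (u,v)), snd (f p q (u,v)), q)) (p,u,v,q)"
        using zz uv uvd by simp
      ultimately show "z \<in> (\<lambda>(p,u,v,q). (p, fst (f p q (u,v)), snd (f p q (u,v)), q)) ` {(p,u,v,q). (u,v) \<in> A p q \<and> X p u v q}"
        by (rule rev_image_eqI)
    qed
  qed
qed

definition AS :: "nat \<Rightarrow> nat \<Rightarrow> nat \<Rightarrow> (nat list \<times> nat list) set" where
  "AS h m n = {(u,v). sorted (u@[h]) \<and> length u = m \<and> sorted v \<and> length v = n \<and> \<not> rel (m+1) (u@[h]) v}"
definition BS :: "nat \<Rightarrow> nat \<Rightarrow> nat \<Rightarrow> (nat list \<times> nat list) set" where
  "BS h m n = {(P,Q). sorted (P@[h]) \<and> length P = n \<and> sorted Q \<and> length Q = m}"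
definition fS :: "nat \<Rightarrow> nat \<Rightarrow> nat \<Rightarrow> nat list \<times> nat list \<Rightarrow> nat list \<times> nat list" where
  "fS h m n uv = (let r = phi (m+1) (n-(m+1)) (fst uv @ [h], snd uv) in (butlast (fst r), snd r))"
definition gS :: "nat \<Rightarrow> nat \<Rightarrow> nat \<Rightarrow> nat list \<times> nat list \<Rightarrow> nat list \<times> nat list" where
  "gS h m n PQ = (let r = psi (n-(m+1)) (fst PQ @ [h], snd PQ) in (butlast (fst r), snd r))"

lemma fS_props:
  assumes "m+1 \<le> n" "(u,v) \<in> AS h m n"
  shows "fS h m n (u,v) \<in> BS h m n \<and> gS h m n (fS h m n (u,v)) = (u,v) \<and>
     mset (fst (fS h m n (u,v))) + mset (snd (fS h m n (u,v))) = mset u + mset v \<and>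
     hd (fst (fS h m n (u,v))) = hd v"
proof -
  have inA: "(u@[h], v) \<in> LA (m+1) n (m+1)" using assms(2) unfolding AS_def LA_def by auto
  obtain P' Q' where ph: "phi (m+1) (n-(m+1)) (u@[h], v) = (P',Q')" by force
  note pp = phi_props[of "m+1" "m+1" n "u@[h]" v, OF _ _ assms(1) inA]
  have inB: "(P',Q') \<in> LB (n+1) m" and ps: "psi (n-(m+1)) (P',Q') = (u@[h],v)"
    and ms: "mset P' + mset Q' = mset (u@[h]) + mset v" and la: "last P' = h" and hh: "hd P' = hd v"
    using pp ph by auto
  have lP': "length P' = n+1" using inB unfolding LB_def by auto
  have "P' \<noteq> []" using lP' by auto
  then have P'eq: "P' = butlast P' @ [h]" using la by (metis append_butlast_last_id)
  have f: "fS h m n (u,v) = (butlast P', Q')" unfolding fS_def using ph by (simp add: Let_def)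
  have "gS h m n (butlast P', Q') = (u,v)" unfolding gS_def using ps P'eq by (simp add: Let_def)
  moreover have "(butlast P', Q') \<in> BS h m n"
  proof -
    have s: "sorted P'" "sorted Q'" "length Q' = m" using inB unfolding LB_def by auto
    from s(1) have "sorted (butlast P' @ [h])" by (subst (asm) P'eq)
    then show ?thesis using s lP' unfolding BS_def by simp
  qed
  moreover have "mset (butlast P') + mset Q' = mset u + mset v"
  proof -
    have "mset P' = mset (butlast P') + {#h#}" by (subst P'eq) simp
    then show ?thesis using ms by simp
  qed
  moreover have "hd (butlast P') = hd v"
  proof -
    have "butlast P' \<noteq> []" using lP' assms(1) by (cases P' rule: rev_cases) auto
    then show ?thesis using hh by (subst (asm) P'eq) simp
  qed
  ultimately show ?thesis using f by simp
qed

lemma gS_props: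
  assumes "m+1 \<le> n" "(P,Q) \<in> BS h m n"
  shows "gS h m n (P,Q) \<in> AS h m n \<and> fS h m n (gS h m n (P,Q)) = (P,Q)"
proof -
  have inB: "(P@[h], Q) \<in> LB ((m+1)+n-(m+1)+1) ((m+1)-1)" using assms(2) unfolding BS_def LB_def by auto
  obtain U V where ps: "psi (n-(m+1)) (P@[h], Q) = (U,V)" by force
  note pp = psi_props[of "m+1" "m+1" n "P@[h]" Q, OF _ _ assms(1) inB]
  have inA: "(U,V) \<in> LA (m+1) n (m+1)" and ph: "phi (m+1) (n-(m+1)) (U,V) = (P@[h],Q)" using pp ps by auto
  note pp2 = phi_props[of "m+1" "m+1" n U V, OF _ _ assms(1) inA]
  have "last U = h" using pp2 ph by simp
  moreover have lU: "length U = m+1" using inA unfolding LA_def by auto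
  moreover have "U \<noteq> []" using lU by auto
  ultimately have Ueq: "U = butlast U @ [h]" by (metis append_butlast_last_id)
  have g: "gS h m n (P,Q) = (butlast U, V)" unfolding gS_def using ps by (simp add: Let_def)
  have "(butlast U, V) \<in> AS h m n"
  proof -
    have s: "sorted U" "sorted V" "length V = n" "\<not> rel (m+1) U V" using inA unfolding LA_def by auto
    from s(1) have "sorted (butlast U @ [h])" by (subst (asm) Ueq)
    moreover from s(4) have "\<not> rel (m+1) (butlast U @ [h]) V" by (subst (asm) Ueq)
    ultimately show ?thesis using s lU unfolding AS_def by simp
  qed
  moreover have "fS h m n (butlast U, V) = (P,Q)" unfolding fS_def using ph Ueq by (simp add: Let_def)
  ultimately show ?thesis using g by simp
qed

lemma fS_bij: "m+1 \<le> n \<Longrightarrow> bij_betw (fS h m n) (AS h m n) (BS h m n)"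
  by (rule bij_betw_byWitness[where f'="gS h m n"]) (use fS_props gS_props in fastforce)+

definition AT :: "nat \<Rightarrow> nat \<Rightarrow> nat \<Rightarrow> (nat list \<times> nat list) set" where
  "AT t m n = {(u,v). sorted u \<and> length u = m+1 \<and> sorted (t#v) \<and> length v = n-1 \<and> \<not> rel n u (t#v)}"
definition BT :: "nat \<Rightarrow> nat \<Rightarrow> nat \<Rightarrow> (nat list \<times> nat list) set" where
  "BT t m n = {(P,Q). sorted (t#P) \<and> length P = m+1 \<and> sorted Q \<and> length Q = n-1}"
definition fT :: "nat \<Rightarrow> nat \<Rightarrow> nat \<Rightarrow> nat list \<times> nat list \<Rightarrow> nat list \<times> nat list" where
  "fT t m n uv = (let r = phi n 0 (fst uv, t # snd uv) in (tl (fst r), snd r))"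
definition gT :: "nat \<Rightarrow> nat \<Rightarrow> nat \<Rightarrow> nat list \<times> nat list \<Rightarrow> nat list \<times> nat list" where
  "gT t m n PQ = (let r = psi 0 (t # fst PQ, snd PQ) in (fst r, tl (snd r)))"

lemma fT_props:
  assumes "1 \<le> n" "n \<le> m+1" "(u,v) \<in> AT t m n"
  shows "fT t m n (u,v) \<in> BT t m n \<and> gT t m n (fT t m n (u,v)) = (u,v) \<and>
     mset (fst (fT t m n (u,v))) + mset (snd (fT t m n (u,v))) = mset u + mset v \<and>
     last (fst (fT t m n (u,v))) = last u"
proof -
  have inA: "(u, t#v) \<in> LA (m+1) n n" using assms unfolding AT_def LA_def by auto
  obtain P' Q' where ph: "phi n (n-n) (u, t#v) = (P',Q')" by force
  note pp = phi_props[of n "m+1" n u "t#v", OF assms(1) assms(2) _ inA]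
  have inB: "(P',Q') \<in> LB (m+2) (n-1)" and ps: "psi (n-n) (P',Q') = (u,t#v)"
    and ms: "mset P' + mset Q' = mset u + mset (t#v)" and la: "last P' = last u" and hh: "hd P' = t"
    using pp ph by auto
  have lP': "length P' = m+2" using inB unfolding LB_def by auto
  have P'eq: "P' = t # tl P'" using hh lP' by (cases P') auto
  have f: "fT t m n (u,v) = (tl P', Q')" unfolding fT_def using ph by (simp add: Let_def)
  have "gT t m n (tl P', Q') = (u,v)" unfolding gT_def using ps P'eq by (simp add: Let_def)
  moreover have "(tl P', Q') \<in> BT t m n"
  proof -
    have s: "sorted P'" "sorted Q'" "length Q' = n-1" using inB unfolding LB_def by auto
    from s(1) have "sorted (t # tl P')" by (subst (asm) P'eq)
    then show ?thesis using s lP' unfolding BT_def by simp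
  qed
  moreover have "mset (tl P') + mset Q' = mset u + mset v"
  proof -
    have "mset P' = mset (tl P') + {#t#}" by (subst P'eq) simp
    then show ?thesis using ms by simp
  qed
  moreover have "last (tl P') = last u"
  proof -
    have "tl P' \<noteq> []" using lP' by (cases P') auto
    then show ?thesis using la by (subst (asm) P'eq) simp
  qed
  ultimately show ?thesis using f by simp
qed

lemma gT_props:
  assumes "1 \<le> n" "n \<le> m+1" "(P,Q) \<in> BT t m n"
  shows "gT t m n (P,Q) \<in> AT t m n \<and> fT t m n (gT t m n (P,Q)) = (P,Q)"
proof -
  have inB: "(t#P, Q) \<in> LB ((m+1)+n-n+1) (n-1)" using assms unfolding BT_def LB_def by auto
  obtain U V where ps: "psi (n-n) (t#P, Q) = (U,V)" by force
  note pp = psi_props[of n "m+1" n "t#P" Q, OF assms(1) assms(2) _ inB]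
  have inA: "(U,V) \<in> LA (m+1) n n" and ph: "phi n (n-n) (U,V) = (t#P,Q)" using pp ps by auto
  note pp2 = phi_props[of n "m+1" n U V, OF assms(1) assms(2) _ inA]
  have "hd V = t" using pp2 ph by simp
  moreover have lV: "length V = n" using inA unfolding LA_def by auto
  ultimately have Veq: "V = t # tl V" using assms(1) by (cases V) auto
  have g: "gT t m n (P,Q) = (U, tl V)" unfolding gT_def using ps by (simp add: Let_def)
  have "(U, tl V) \<in> AT t m n"
  proof -
    have s: "sorted U" "sorted V" "length U = m+1" "\<not> rel n U V" using inA unfolding LA_def by auto
    from s(2) have "sorted (t # tl V)" by (subst (asm) Veq)
    moreover from s(4) have "\<not> rel n U (t # tl V)" by (subst (asm) Veq)
    ultimately show ?thesis using s lV unfolding AT_def by simp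
  qed
  moreover have "fT t m n (U, tl V) = (P,Q)" unfolding fT_def using ph Veq by (simp add: Let_def)
  ultimately show ?thesis using g by simp
qed

lemma fT_bij: "1 \<le> n \<Longrightarrow> n \<le> m+1 \<Longrightarrow> bij_betw (fT t m n) (AT t m n) (BT t m n)"
  by (rule bij_betw_byWitness[where f'="gT t m n"]) (use fT_props gT_props in fastforce)+

definition WF :: "nat list \<Rightarrow> nat list \<Rightarrow> nat list list \<Rightarrow> bool" where
  "WF \<alpha> \<beta> ws \<longleftrightarrow> length ws = length \<alpha> \<and> (\<forall>i<length \<alpha>. rowok (\<alpha>!i) (ws!i)) \<and>
     (\<forall>i. Suc i < length \<alpha> \<longrightarrow> rel (\<beta>!i) (ws!i) (ws!Suc i))"

definition valid :: "nat list \<Rightarrow> nat list \<Rightarrow> bool" where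
  "valid \<alpha> \<beta> \<longleftrightarrow> \<alpha> \<noteq> [] \<and> length \<beta> + 1 = length \<alpha> \<and>
     (\<forall>i. Suc i < length \<alpha> \<longrightarrow> \<beta>!i \<le> \<alpha>!i \<and> \<beta>!i \<le> \<alpha>!Suc i)"

definition wcnt :: "nat list list \<Rightarrow> nat \<Rightarrow> nat" where
  "wcnt ws = count (mset (concat ws))"

definition emb :: "nat list \<Rightarrow> nat list \<Rightarrow> nat list list \<Rightarrow> nat \<times> nat \<Rightarrow> nat" where
  "emb lam mu ws = (\<lambda>(i,j). if i < length lam \<and> mu!i < j \<and> j \<le> lam!i then ws!i!(j - Suc (mu!i)) else 0)"

definition unemb :: "nat list \<Rightarrow> nat list \<Rightarrow> (nat \<times> nat \<Rightarrow> nat) \<Rightarrow> nat list list" where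
  "unemb \<alpha> mu T = map (\<lambda>i. map (\<lambda>k. T (i, Suc (mu!i) + k)) [0..<\<alpha>!i]) [0..<length \<alpha>]"

lemma count_concat: "count (mset (concat ws)) k = (\<Sum>i<length ws. count (mset (ws!i)) k)"
  by (induction ws) (simp_all add: sum.lessThan_Suc_shift del: sum.lessThan_Suc)

lemma count_mset_card: "count (mset xs) k = card {p. p < length xs \<and> xs!p = k}"
proof -
  have "count (mset xs) k = length (filter ((=) k) xs)"
    by (metis length_replicate replicate_count_mset_eq_filter_eq)
  also have "\<dots> = card {p. p < length xs \<and> xs!p = k}" by (simp add: length_filter_conv_card eq_commute)
  finally show ?thesis .
qed

locale geo =
  fixes \<alpha> \<beta> lam mu :: "nat list"
  assumes len: "length lam = length \<alpha>" "length mu = length \<alpha>"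
    and lam_eq: "\<And>i. i < length \<alpha> \<Longrightarrow> lam!i = mu!i + \<alpha>!i"
    and mu_Suc: "\<And>i. Suc i < length \<alpha> \<Longrightarrow> mu!Suc i + \<alpha>!Suc i = mu!i + \<beta>!i"
    and bet: "\<And>i. Suc i < length \<alpha> \<Longrightarrow> \<beta>!i \<le> \<alpha>!i \<and> \<beta>!i \<le> \<alpha>!Suc i"
    and mono: "\<And>i j. i \<le> j \<Longrightarrow> j < length \<alpha> \<Longrightarrow> mu!j \<le> mu!i \<and> lam!j \<le> lam!i"
begin

abbreviation "L \<equiv> length \<alpha>"

lemma box_iff: "(i,j) \<in> skew_boxes lam mu \<longleftrightarrow> i < L \<and> mu!i < j \<and> j \<le> lam!i"
  unfolding skew_boxes_def using len by simp

lemma emb_box: "(i,j) \<in> skew_boxes lam mu \<Longrightarrow> emb lam mu ws (i,j) = ws!i!(j - Suc (mu!i))"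
  unfolding emb_def using box_iff len by simp

lemma emb_adj:
  assumes W: "WF \<alpha> \<beta> ws" and b1: "(i,j) \<in> skew_boxes lam mu" and b2: "(Suc i,j) \<in> skew_boxes lam mu"
  shows "emb lam mu ws (i,j) < emb lam mu ws (Suc i,j)"
proof -
  have i: "Suc i < L" "mu!i < j" "j \<le> lam!i" using b1 b2 box_iff by auto
  have j2: "mu!Suc i < j" "j \<le> lam!Suc i" using b2 box_iff by auto
  have e1: "lam!Suc i = mu!Suc i + \<alpha>!Suc i" using lam_eq i by simp
  have e2: "mu!Suc i + \<alpha>!Suc i = mu!i + \<beta>!i" using mu_Suc i by simp
  have bb: "\<beta>!i \<le> \<alpha>!i \<and> \<beta>!i \<le> \<alpha>!Suc i" using bet i by simp
  define k where "k = j - Suc (mu!i)"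
  have kb: "k < \<beta>!i" using i j2 e1 e2 k_def by linarith
  have r: "rel (\<beta>!i) (ws!i) (ws!Suc i)" using W i unfolding WF_def by simp
  have lw: "length (ws!Suc i) = \<alpha>!Suc i" using W i unfolding WF_def rowok_def by simp
  have "ws!i!k < ws!Suc i!(k + \<alpha>!Suc i - \<beta>!i)" using r kb lw unfolding rel_def by simp
  moreover have "k + \<alpha>!Suc i - \<beta>!i = j - Suc (mu!Suc i)" using k_def i j2 e2 bb by linarith
  ultimately show ?thesis using emb_box[OF b1] emb_box[OF b2] k_def by simp
qed

lemma emb_col:
  assumes W: "WF \<alpha> \<beta> ws"
  shows "(i,j) \<in> skew_boxes lam mu \<Longrightarrow> (i+d+1,j) \<in> skew_boxes lam mu \<Longrightarrow>
         emb lam mu ws (i,j) < emb lam mu ws (i+d+1,j)"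
proof (induction d arbitrary: i)
  case 0
  then show ?case using emb_adj[OF W] by simp
next
  case (Suc d)
  have a: "i+Suc d+1 < L" "mu!(i+Suc d+1) < j" "j \<le> lam!(i+Suc d+1)" using Suc.prems box_iff by auto
  have b: "mu!i < j" using Suc.prems box_iff by auto
  have "mu!(Suc i) \<le> mu!i" "lam!(i+Suc d+1) \<le> lam!(Suc i)" using mono[of i "Suc i"] mono[of "Suc i" "i+Suc d+1"] a by auto
  then have bx: "(Suc i, j) \<in> skew_boxes lam mu" using a b box_iff by auto
  have "emb lam mu ws (i,j) < emb lam mu ws (Suc i,j)" using emb_adj[OF W Suc.prems(1) bx] .
  also have "\<dots> < emb lam mu ws (Suc i + d + 1, j)" using Suc.IH[OF bx] Suc.prems(2) by simp
  finally show ?case by simp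
qed

lemma emb_ssyt:
  assumes W: "WF \<alpha> \<beta> ws"
  shows "ssyt lam mu (emb lam mu ws)"
  unfolding ssyt_def
proof (intro conjI allI ballI impI)
  fix b assume "b \<notin> skew_boxes lam mu"
  then show "emb lam mu ws b = 0" unfolding emb_def skew_boxes_def by (cases b) auto
next
  fix b assume bb: "b \<in> skew_boxes lam mu"
  obtain i j where b: "b = (i,j)" by force
  have i: "i < L" "mu!i < j" "j \<le> lam!i" using bb b box_iff by auto
  have "j - Suc (mu!i) < \<alpha>!i" using i lam_eq by simp
  moreover have "rowok (\<alpha>!i) (ws!i)" using W i unfolding WF_def by simp
  ultimately have "ws!i!(j - Suc (mu!i)) \<in> set (ws!i)" "\<forall>v\<in>set (ws!i). 0 < v" unfolding rowok_def by auto
  then show "1 \<le> emb lam mu ws b" using emb_box bb b by fastforce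
next
  fix i j j' assume a: "(i,j) \<in> skew_boxes lam mu \<and> (i,j') \<in> skew_boxes lam mu \<and> j < j'"
  have i: "i < L" "mu!i < j" "j' \<le> lam!i" using a box_iff by auto
  have r: "rowok (\<alpha>!i) (ws!i)" using W i unfolding WF_def by simp
  have ii: "j - Suc (mu!i) \<le> j' - Suc (mu!i)" "j' - Suc (mu!i) < length (ws!i)"
    using r i a lam_eq[of i] unfolding rowok_def by auto
  have "ws!i!(j - Suc (mu!i)) \<le> ws!i!(j' - Suc (mu!i))"
    using sorted_nth_mono[of "ws!i", OF _ ii] r unfolding rowok_def by simp
  then show "emb lam mu ws (i,j) \<le> emb lam mu ws (i,j')" using emb_box a by simp
next
  fix i i' j assume a: "(i,j) \<in> skew_boxes lam mu \<and> (i',j) \<in> skew_boxes lam mu \<and> i < i'"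
  then obtain d where "i' = i + d + 1" by (metis add.commute add_Suc less_iff_Suc_add plus_1_eq_Suc)
  then show "emb lam mu ws (i,j) < emb lam mu ws (i',j)" using emb_col[OF W] a by simp
qed

lemma emb_content:
  assumes W: "WF \<alpha> \<beta> ws"
  shows "content lam mu (emb lam mu ws) k = wcnt ws k"
proof -
  define S where "S i = (\<lambda>p. (i, Suc (mu!i) + p)) ` {p. p < \<alpha>!i \<and> ws!i!p = k}" for i
  have eq: "{b \<in> skew_boxes lam mu. emb lam mu ws b = k} = (\<Union>i<L. S i)"
  proof
    show "{b \<in> skew_boxes lam mu. emb lam mu ws b = k} \<subseteq> (\<Union>i<L. S i)"
    proof
      fix b assume bb: "b \<in> {b \<in> skew_boxes lam mu. emb lam mu ws b = k}"
      obtain i j where b: "b = (i,j)" by force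
      have i: "i < L" "mu!i < j" "j \<le> lam!i" using bb b box_iff by auto
      have "ws!i!(j - Suc (mu!i)) = k" using bb b emb_box by auto
      moreover have "j - Suc (mu!i) < \<alpha>!i" using i lam_eq by simp
      moreover have "j = Suc (mu!i) + (j - Suc (mu!i))" using i by simp
      ultimately have "b \<in> S i" unfolding S_def b by blast
      then show "b \<in> (\<Union>i<L. S i)" using i by blast
    qed
    show "(\<Union>i<L. S i) \<subseteq> {b \<in> skew_boxes lam mu. emb lam mu ws b = k}"
    proof
      fix b assume "b \<in> (\<Union>i<L. S i)"
      then obtain i p where ip: "i < L" "p < \<alpha>!i" "ws!i!p = k" "b = (i, Suc (mu!i) + p)" unfolding S_def by blast
      have bx: "b \<in> skew_boxes lam mu" using ip box_iff lam_eq by simp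
      then show "b \<in> {b \<in> skew_boxes lam mu. emb lam mu ws b = k}" using emb_box[of i "Suc (mu!i) + p"] ip by simp
    qed
  qed
  have cS: "card (S i) = count (mset (ws!i)) k" if "i < L" for i
  proof -
    have "card (S i) = card {p. p < \<alpha>!i \<and> ws!i!p = k}" unfolding S_def by (rule card_image) (simp add: inj_on_def)
    moreover have "length (ws!i) = \<alpha>!i" using W that unfolding WF_def rowok_def by simp
    moreover have "count (mset (ws!i)) k = card {p. p < length (ws!i) \<and> ws!i!p = k}" by (rule count_mset_card)
    ultimately show ?thesis by simp
  qed
  have "content lam mu (emb lam mu ws) k = card (\<Union>i<L. S i)" unfolding content_def eq ..
  also have "\<dots> = (\<Sum>i<L. card (S i))"
    by (rule card_UN_disjoint) (auto simp: S_def)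
  also have "\<dots> = (\<Sum>i<L. count (mset (ws!i)) k)" using cS by simp
  also have "\<dots> = wcnt ws k" unfolding wcnt_def count_concat using W unfolding WF_def by simp
  finally show ?thesis .
qed

lemma unemb_emb:
  assumes W: "WF \<alpha> \<beta> ws"
  shows "unemb \<alpha> mu (emb lam mu ws) = ws"
proof (rule nth_equalityI)
  show "length (unemb \<alpha> mu (emb lam mu ws)) = length ws" using W unfolding unemb_def WF_def by simp
  fix i assume "i < length (unemb \<alpha> mu (emb lam mu ws))"
  then have i: "i < L" unfolding unemb_def by simp
  have lw: "length (ws!i) = \<alpha>!i" using W i unfolding WF_def rowok_def by simp
  show "unemb \<alpha> mu (emb lam mu ws) ! i = ws ! i"
  proof (rule nth_equalityI)
    show "length (unemb \<alpha> mu (emb lam mu ws) ! i) = length (ws!i)" using i lw unfolding unemb_def by simp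
    fix p assume "p < length (unemb \<alpha> mu (emb lam mu ws) ! i)"
    then have p: "p < \<alpha>!i" using i unfolding unemb_def by simp
    have "(i, Suc (mu!i) + p) \<in> skew_boxes lam mu" using i p box_iff lam_eq by simp
    then show "unemb \<alpha> mu (emb lam mu ws) ! i ! p = ws!i!p" using i p unfolding unemb_def
      by (simp add: emb_box)
  qed
qed

lemma unemb_WF:
  assumes T: "ssyt lam mu T"
  shows "WF \<alpha> \<beta> (unemb \<alpha> mu T) \<and> emb lam mu (unemb \<alpha> mu T) = T"
proof -
  have z: "\<And>b. b \<notin> skew_boxes lam mu \<Longrightarrow> T b = 0" and p: "\<And>b. b \<in> skew_boxes lam mu \<Longrightarrow> 1 \<le> T b"
    and r: "\<And>i j j'. (i,j) \<in> skew_boxes lam mu \<Longrightarrow> (i,j') \<in> skew_boxes lam mu \<Longrightarrow> j < j' \<Longrightarrow> T (i,j) \<le> T (i,j')"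
    and c: "\<And>i i' j. (i,j) \<in> skew_boxes lam mu \<Longrightarrow> (i',j) \<in> skew_boxes lam mu \<Longrightarrow> i < i' \<Longrightarrow> T (i,j) < T (i',j)"
    using T unfolding ssyt_def by blast+
  let ?U = "unemb \<alpha> mu T"
  have bx: "\<And>i p. i < L \<Longrightarrow> p < \<alpha>!i \<Longrightarrow> (i, Suc (mu!i) + p) \<in> skew_boxes lam mu"
    using box_iff lam_eq by simp
  have Ui: "\<And>i p. i < L \<Longrightarrow> p < \<alpha>!i \<Longrightarrow> ?U!i!p = T (i, Suc (mu!i) + p)" unfolding unemb_def by simp
  have lU: "\<And>i. i < L \<Longrightarrow> length (?U!i) = \<alpha>!i" unfolding unemb_def by simp
  have rows: "rowok (\<alpha>!i) (?U!i)" if i: "i < L" for i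
    unfolding rowok_def
  proof (intro conjI)
    show "length (?U!i) = \<alpha>!i" using lU i .
    show "sorted (?U!i)" unfolding sorted_iff_nth_mono
    proof (intro allI impI)
      fix a b assume "a \<le> b" "b < length (?U!i)"
      then show "?U!i!a \<le> ?U!i!b" using lU[OF i] Ui[OF i] bx[OF i] r[of i "Suc (mu!i) + a" "Suc (mu!i) + b"]
        by (cases "a = b") auto
    qed
    show "\<forall>v\<in>set (?U!i). 0 < v"
    proof
      fix v assume "v \<in> set (?U!i)"
      then obtain a where "a < length (?U!i)" "v = ?U!i!a" by (auto simp: in_set_conv_nth)
      then show "0 < v" using lU[OF i] Ui[OF i] bx[OF i] p by fastforce
    qed
  qed
  have rels: "rel (\<beta>!i) (?U!i) (?U!Suc i)" if i: "Suc i < L" for i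
    unfolding rel_def
  proof (intro allI impI)
    fix k assume k: "k < \<beta>!i"
    have bb: "\<beta>!i \<le> \<alpha>!i \<and> \<beta>!i \<le> \<alpha>!Suc i" using bet i by simp
    have e2: "mu!Suc i + \<alpha>!Suc i = mu!i + \<beta>!i" using mu_Suc i by simp
    have idx: "k + length (?U!Suc i) - \<beta>!i < \<alpha>!Suc i" using lU[OF i] k bb by arith
    have idx2: "Suc (mu!Suc i) + (k + length (?U!Suc i) - \<beta>!i) = Suc (mu!i) + k"
      using lU[OF i] k bb e2 by simp
    have b1: "(i, Suc (mu!i) + k) \<in> skew_boxes lam mu" using bx[of i k] i k bb by simp
    have b2: "(Suc i, Suc (mu!i) + k) \<in> skew_boxes lam mu" using bx[OF i idx] idx2 by simp
    show "?U!i!k < ?U!Suc i!(k + length (?U!Suc i) - \<beta>!i)"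
      using Ui[of i k] Ui[OF i idx] idx2 c[OF b1 b2] i k bb by simp
  qed
  have W: "WF \<alpha> \<beta> ?U" unfolding WF_def using rows rels by (simp add: unemb_def)
  have "emb lam mu ?U = T"
  proof (rule ext)
    fix b :: "nat \<times> nat"
    obtain i j where b: "b = (i,j)" by force
    show "emb lam mu ?U b = T b"
    proof (cases "b \<in> skew_boxes lam mu")
      case True
      then have i: "i < L" "mu!i < j" "j \<le> lam!i" using b box_iff by auto
      have "j - Suc (mu!i) < \<alpha>!i" using i lam_eq by simp
      then show ?thesis using emb_box True b Ui i by simp
    next
      case False
      then show ?thesis using z b unfolding emb_def using len by (auto simp: box_iff)
    qed
  qed
  then show ?thesis using W by simp
qed

lemma card_eq: "card {ws. WF \<alpha> \<beta> ws \<and> wcnt ws = c} = card {T. ssyt lam mu T \<and> content lam mu T = c}"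
proof (rule bij_betw_same_card[of "emb lam mu"], rule bij_betw_byWitness[where f'="unemb \<alpha> mu"])
  show "\<forall>a\<in>{ws. WF \<alpha> \<beta> ws \<and> wcnt ws = c}. unemb \<alpha> mu (emb lam mu a) = a" using unemb_emb by auto
  show "\<forall>a'\<in>{T. ssyt lam mu T \<and> content lam mu T = c}. emb lam mu (unemb \<alpha> mu a') = a'" using unemb_WF by auto
  show "emb lam mu ` {ws. WF \<alpha> \<beta> ws \<and> wcnt ws = c} \<subseteq> {T. ssyt lam mu T \<and> content lam mu T = c}"
    using emb_ssyt emb_content by auto
  show "unemb \<alpha> mu ` {T. ssyt lam mu T \<and> content lam mu T = c} \<subseteq> {ws. WF \<alpha> \<beta> ws \<and> wcnt ws = c}"
  proof (rule image_subsetI)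
    fix T assume "T \<in> {T. ssyt lam mu T \<and> content lam mu T = c}"
    then have T: "ssyt lam mu T" "content lam mu T = c" by auto
    have W: "WF \<alpha> \<beta> (unemb \<alpha> mu T)" and E: "emb lam mu (unemb \<alpha> mu T) = T" using unemb_WF[OF T(1)] by auto
    have "wcnt (unemb \<alpha> mu T) = content lam mu T"
      using emb_content[OF W] E by (auto simp: fun_eq_iff)
    then show "unemb \<alpha> mu T \<in> {ws. WF \<alpha> \<beta> ws \<and> wcnt ws = c}" using W T by simp
  qed
qed

end

lemma st_Suc: "ov_start \<alpha> \<beta> (Suc i) = ov_start \<alpha> \<beta> i + int (\<beta>!i) - int (\<alpha>!Suc i)"
  by (simp add: ov_start_def)

lemma st_anti:
  assumes "valid \<alpha> \<beta>"
  shows "i \<le> j \<Longrightarrow> j < length \<alpha> \<Longrightarrow> ov_start \<alpha> \<beta> j \<le> ov_start \<alpha> \<beta> i \<and>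
           ov_start \<alpha> \<beta> j + int (\<alpha>!j) \<le> ov_start \<alpha> \<beta> i + int (\<alpha>!i)"
proof (induction j)
  case 0 then show ?case by simp
next
  case (Suc j)
  show ?case
  proof (cases "i = Suc j")
    case True then show ?thesis by simp
  next
    case False
    then have "i \<le> j" using Suc.prems by simp
    have IH: "ov_start \<alpha> \<beta> j \<le> ov_start \<alpha> \<beta> i \<and> ov_start \<alpha> \<beta> j + int (\<alpha>!j) \<le> ov_start \<alpha> \<beta> i + int (\<alpha>!i)"
      using Suc.IH \<open>i \<le> j\<close> Suc.prems by simp
    have b: "\<beta>!j \<le> \<alpha>!j \<and> \<beta>!j \<le> \<alpha>!Suc j" using assms Suc.prems unfolding valid_def by simp
    show ?thesis using IH b st_Suc[of \<alpha> \<beta> j] by simp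
  qed
qed

lemma valid_geo:
  assumes V: "valid \<alpha> \<beta>"
  shows "geo \<alpha> \<beta> (ov_lambda \<alpha> \<beta>) (ov_mu \<alpha> \<beta>)"
proof -
  define L where "L = length \<alpha>"
  define st where "st = ov_start \<alpha> \<beta>"
  define base where "base = st (L - 1)"
  have L: "0 < L" using V unfolding valid_def L_def by simp
  have ge: "\<And>i. i < L \<Longrightarrow> base \<le> st i" unfolding base_def st_def L_def
    using st_anti[OF V] L L_def by auto
  have ge2: "\<And>i. i < L \<Longrightarrow> base \<le> st i + int (\<alpha>!i)" using ge by (meson add_increasing2 of_nat_0_le_iff)
  have lam: "\<And>i. i < L \<Longrightarrow> int (ov_lambda \<alpha> \<beta> ! i) = st i + int (\<alpha>!i) - base"
    unfolding ov_lambda_def using ge2 unfolding st_def base_def L_def by auto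
  have mu: "\<And>i. i < L \<Longrightarrow> int (ov_mu \<alpha> \<beta> ! i) = st i - base"
    unfolding ov_mu_def using ge unfolding st_def base_def L_def by auto
  show ?thesis
  proof
    show "length (ov_lambda \<alpha> \<beta>) = length \<alpha>" "length (ov_mu \<alpha> \<beta>) = length \<alpha>"
      unfolding ov_lambda_def ov_mu_def by simp_all
  next
    fix i assume "i < length \<alpha>"
    then show "ov_lambda \<alpha> \<beta> ! i = ov_mu \<alpha> \<beta> ! i + \<alpha> ! i" using lam mu L_def by force
  next
    fix i assume i: "Suc i < length \<alpha>"
    have "st (Suc i) = st i + int (\<beta>!i) - int (\<alpha>!Suc i)" unfolding st_def by (rule st_Suc)
    then show "ov_mu \<alpha> \<beta> ! Suc i + \<alpha> ! Suc i = ov_mu \<alpha> \<beta> ! i + \<beta> ! i"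
      using mu[of i] mu[of "Suc i"] i L_def by simp
  next
    fix i assume "Suc i < length \<alpha>"
    then show "\<beta> ! i \<le> \<alpha> ! i \<and> \<beta> ! i \<le> \<alpha> ! Suc i" using V unfolding valid_def by simp
  next
    fix i j assume ij: "i \<le> j" "j < length \<alpha>"
    have "st j \<le> st i \<and> st j + int (\<alpha>!j) \<le> st i + int (\<alpha>!i)" unfolding st_def using st_anti[OF V ij] .
    then show "ov_mu \<alpha> \<beta> ! j \<le> ov_mu \<alpha> \<beta> ! i \<and> ov_lambda \<alpha> \<beta> ! j \<le> ov_lambda \<alpha> \<beta> ! i"
      using lam[of i] lam[of j] mu[of i] mu[of j] ij L_def by simp
  qed
qed

lemma ov_schur_card:
  assumes "valid \<alpha> \<beta>"
  shows "ov_schur \<alpha> \<beta> c = int (card {ws. WF \<alpha> \<beta> ws \<and> wcnt ws = c})"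
proof -
  interpret geo \<alpha> \<beta> "ov_lambda \<alpha> \<beta>" "ov_mu \<alpha> \<beta>" using valid_geo[OF assms] .
  show ?thesis unfolding ov_schur_def skew_schur_def using card_eq by simp
qed

lemma WF_len: "WF \<alpha> \<beta> ws \<Longrightarrow> length ws = length \<alpha>" unfolding WF_def by simp

lemma WF_app:
  assumes l1: "length ws1 = length \<alpha>1" and l2: "length \<beta>1 + 1 = length \<alpha>1"
    and l3: "length ws2 = length \<alpha>2" and ne: "\<alpha>2 \<noteq> []"
  shows "WF (\<alpha>1@\<alpha>2) (\<beta>1 @ y # \<beta>2) (ws1@ws2) \<longleftrightarrow> WF \<alpha>1 \<beta>1 ws1 \<and> WF \<alpha>2 \<beta>2 ws2 \<and> rel y (last ws1) (hd ws2)"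
proof -
  define n1 where "n1 = length \<alpha>1"
  define n2 where "n2 = length \<alpha>2"
  have n1: "0 < n1" using l2 unfolding n1_def by linarith
  have n2: "0 < n2" using ne n2_def by simp
  have A: "\<And>i. i < n1 \<Longrightarrow> (\<alpha>1@\<alpha>2)!i = \<alpha>1!i \<and> (ws1@ws2)!i = ws1!i"
    using l1 n1_def by (simp add: nth_append)
  have B: "\<And>i. (\<alpha>1@\<alpha>2)!(n1+i) = \<alpha>2!i \<and> (ws1@ws2)!(n1+i) = ws2!i"
    using l1 n1_def by (simp add: nth_append)
  have C: "\<And>i. i < n1 - 1 \<Longrightarrow> (\<beta>1 @ y # \<beta>2)!i = \<beta>1!i"
  proof -
    fix i assume "i < n1 - 1"
    then have "i < length \<beta>1" using l2 n1_def by simp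
    then show "(\<beta>1 @ y # \<beta>2)!i = \<beta>1!i" by (simp add: nth_append)
  qed
  have nb: "n1 - 1 = length \<beta>1" "\<And>i. n1 + i = Suc (length \<beta>1 + i)" using l2 n1_def by auto
  have D: "(\<beta>1 @ y # \<beta>2)!(n1-1) = y" unfolding nb by (simp add: nth_append)
  have E: "\<And>i. (\<beta>1 @ y # \<beta>2)!(n1+i) = \<beta>2!i" unfolding nb by (simp add: nth_append)
  have "ws1 \<noteq> []" using l1 n1 n1_def by auto
  then have lw1: "last ws1 = ws1!(n1-1)" using l1 n1_def by (simp add: last_conv_nth)
  have "ws2 \<noteq> []" using l3 n2 n2_def by auto
  then have hw2: "hd ws2 = ws2!0" by (simp add: hd_conv_nth)
  have len: "length (\<alpha>1@\<alpha>2) = n1 + n2" "length (ws1@ws2) = n1+n2" using l1 l3 n1_def n2_def by simp_all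
  show ?thesis
  proof
    assume W: "WF (\<alpha>1@\<alpha>2) (\<beta>1 @ y # \<beta>2) (ws1@ws2)"
    have r: "\<And>i. i < n1 + n2 \<Longrightarrow> rowok ((\<alpha>1@\<alpha>2)!i) ((ws1@ws2)!i)" using W len unfolding WF_def by simp
    have s: "\<And>i. Suc i < n1 + n2 \<Longrightarrow> rel ((\<beta>1 @ y # \<beta>2)!i) ((ws1@ws2)!i) ((ws1@ws2)!Suc i)"
      using W len unfolding WF_def by simp
    have "WF \<alpha>1 \<beta>1 ws1" unfolding WF_def
    proof (intro conjI allI impI)
      show "length ws1 = length \<alpha>1" by (rule l1)
      fix i assume "i < length \<alpha>1" then show "rowok (\<alpha>1!i) (ws1!i)" using r[of i] A[of i] n1_def by simp
    next
      fix i assume i: "Suc i < length \<alpha>1"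
      then show "rel (\<beta>1!i) (ws1!i) (ws1!Suc i)" using s[of i] A[of i] A[of "Suc i"] C[of i] n1_def by simp
    qed
    moreover have "WF \<alpha>2 \<beta>2 ws2" unfolding WF_def
    proof (intro conjI allI impI)
      show "length ws2 = length \<alpha>2" by (rule l3)
      fix i assume "i < length \<alpha>2" then show "rowok (\<alpha>2!i) (ws2!i)" using r[of "n1+i"] B[of i] n2_def by simp
    next
      fix i assume i: "Suc i < length \<alpha>2"
      then show "rel (\<beta>2!i) (ws2!i) (ws2!Suc i)" using s[of "n1+i"] B[of i] B[of "Suc i"] E[of i] n2_def by simp
    qed
    moreover have "rel y (last ws1) (hd ws2)"
      using s[of "n1-1"] A[of "n1-1"] B[of 0] D lw1 hw2 n1 n2 by simp
    ultimately show "WF \<alpha>1 \<beta>1 ws1 \<and> WF \<alpha>2 \<beta>2 ws2 \<and> rel y (last ws1) (hd ws2)" by simp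
  next
    assume H: "WF \<alpha>1 \<beta>1 ws1 \<and> WF \<alpha>2 \<beta>2 ws2 \<and> rel y (last ws1) (hd ws2)"
    have r1: "\<And>i. i < n1 \<Longrightarrow> rowok (\<alpha>1!i) (ws1!i)" using H n1_def unfolding WF_def by simp
    have r2: "\<And>i. i < n2 \<Longrightarrow> rowok (\<alpha>2!i) (ws2!i)" using H n2_def unfolding WF_def by simp
    have s1: "\<And>i. Suc i < n1 \<Longrightarrow> rel (\<beta>1!i) (ws1!i) (ws1!Suc i)" using H n1_def unfolding WF_def by simp
    have s2: "\<And>i. Suc i < n2 \<Longrightarrow> rel (\<beta>2!i) (ws2!i) (ws2!Suc i)" using H n2_def unfolding WF_def by simp
    show "WF (\<alpha>1@\<alpha>2) (\<beta>1 @ y # \<beta>2) (ws1@ws2)" unfolding WF_def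
    proof (intro conjI allI impI)
      show "length (ws1@ws2) = length (\<alpha>1@\<alpha>2)" using len by simp
    next
      fix i assume i: "i < length (\<alpha>1@\<alpha>2)"
      show "rowok ((\<alpha>1@\<alpha>2)!i) ((ws1@ws2)!i)"
      proof (cases "i < n1")
        case True then show ?thesis using A r1 by simp
      next
        case False
        define k where "k = i - n1"
        have k: "i = n1 + k" using False unfolding k_def by simp
        then show ?thesis using B[of k] r2[of k] i len by simp
      qed
    next
      fix i assume i: "Suc i < length (\<alpha>1@\<alpha>2)"
      show "rel ((\<beta>1 @ y # \<beta>2)!i) ((ws1@ws2)!i) ((ws1@ws2)!Suc i)"
      proof (cases "Suc i < n1")
        case True then show ?thesis using A[of i] A[of "Suc i"] C[of i] s1[of i] by simp
      next
        case False
        show ?thesis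
        proof (cases "i = n1 - 1")
          case True
          then have "Suc i = n1 + 0" using n1 by simp
          then show ?thesis using True A[of i] B[of 0] D H lw1 hw2 n1 by simp
        next
          case False
          define k where "k = i - n1"
          have k: "i = n1 + k" using False \<open>\<not> Suc i < n1\<close> unfolding k_def by simp
          then show ?thesis using B[of k] B[of "Suc k"] E[of k] s2[of k] i len by simp
        qed
      qed
    qed
  qed
qed

lemma WF_single: "WF [a] [] [w] \<longleftrightarrow> rowok a w" unfolding WF_def by simp
lemma WF_nil: "WF [] \<beta> ws \<longleftrightarrow> ws = []" unfolding WF_def by simp

lemma WF_snoc:
  assumes "length \<beta> = length \<alpha>" "length ws = length \<alpha>"
  shows "WF (\<alpha>@[a]) \<beta> (ws@[w]) \<longleftrightarrow> WF \<alpha> (butlast \<beta>) ws \<and> rowok a w \<and> (\<alpha> \<noteq> [] \<longrightarrow> rel (last \<beta>) (last ws) w)"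
proof (cases "\<alpha> = []")
  case True then show ?thesis using assms by (simp add: WF_single WF_nil)
next
  case False
  then have b: "\<beta> = butlast \<beta> @ [last \<beta>]" using assms by (metis append_butlast_last_id length_0_conv)
  have "WF (\<alpha>@[a]) (butlast \<beta> @ last \<beta> # []) (ws@[w]) \<longleftrightarrow> WF \<alpha> (butlast \<beta>) ws \<and> WF [a] [] [w] \<and> rel (last \<beta>) (last ws) (hd [w])"
    by (rule WF_app) (use assms False in auto)
  then show ?thesis using b False WF_single by (metis append_Cons append_Nil list.sel(1))
qed

lemma WF_cons:
  assumes "length \<beta> = length \<alpha>" "length ws = length \<alpha>"
  shows "WF (a#\<alpha>) \<beta> (w#ws) \<longleftrightarrow> rowok a w \<and> WF \<alpha> (tl \<beta>) ws \<and> (\<alpha> \<noteq> [] \<longrightarrow> rel (hd \<beta>) w (hd ws))"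
proof (cases "\<alpha> = []")
  case True then show ?thesis using assms by (simp add: WF_single WF_nil)
next
  case False
  then have b: "\<beta> = hd \<beta> # tl \<beta>" using assms by (metis list.collapse length_0_conv)
  have "WF ([a]@\<alpha>) ([] @ hd \<beta> # tl \<beta>) ([w]@ws) \<longleftrightarrow> WF [a] [] [w] \<and> WF \<alpha> (tl \<beta>) ws \<and> rel (hd \<beta>) (last [w]) (hd ws)"
    by (rule WF_app) (use assms False in auto)
  then show ?thesis using b False WF_single by (metis append_Cons append_Nil last_ConsL)
qed

lemma WF_split:
  assumes "length \<sigma>b = length \<sigma>" "length \<tau>b = length \<tau>" "length ps = length \<sigma>" "length qs = length \<tau>"
  shows "WF (\<sigma>@[m',n']@\<tau>) (\<sigma>b@[y]@\<tau>b) (ps@[u,v]@qs) \<longleftrightarrow>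
    WF \<sigma> (butlast \<sigma>b) ps \<and> WF \<tau> (tl \<tau>b) qs \<and> rowok m' u \<and> rowok n' v \<and>
    (\<sigma> \<noteq> [] \<longrightarrow> rel (last \<sigma>b) (last ps) u) \<and> rel y u v \<and> (\<tau> \<noteq> [] \<longrightarrow> rel (hd \<tau>b) v (hd qs))"
proof -
  have "WF ((\<sigma>@[m'])@(n'#\<tau>)) (\<sigma>b @ y # \<tau>b) ((ps@[u])@(v#qs)) \<longleftrightarrow>
      WF (\<sigma>@[m']) \<sigma>b (ps@[u]) \<and> WF (n'#\<tau>) \<tau>b (v#qs) \<and> rel y (last (ps@[u])) (hd (v#qs))"
    by (rule WF_app) (use assms in auto)
  moreover have "WF (\<sigma>@[m']) \<sigma>b (ps@[u]) \<longleftrightarrow> WF \<sigma> (butlast \<sigma>b) ps \<and> rowok m' u \<and> (\<sigma> \<noteq> [] \<longrightarrow> rel (last \<sigma>b) (last ps) u)"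
    by (rule WF_snoc) (use assms in auto)
  moreover have "WF (n'#\<tau>) \<tau>b (v#qs) \<longleftrightarrow> rowok n' v \<and> WF \<tau> (tl \<tau>b) qs \<and> (\<tau> \<noteq> [] \<longrightarrow> rel (hd \<tau>b) v (hd qs))"
    by (rule WF_cons) (use assms in auto)
  ultimately show ?thesis by auto
qed

definition cnt4 :: "nat list list \<Rightarrow> nat list \<Rightarrow> nat list \<Rightarrow> nat list list \<Rightarrow> nat multiset" where
  "cnt4 ps u v qs = mset (concat ps) + mset u + mset v + mset (concat qs)"

lemma wcnt_join: "wcnt (ps@[u,v]@qs) = count (cnt4 ps u v qs)"
  unfolding wcnt_def cnt4_def by (simp add: ac_simps)

lemma join_split: "Suc (Suc s) \<le> length ws \<Longrightarrow> take s ws @ [ws!s, ws!Suc s] @ drop (Suc (Suc s)) ws = ws"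
proof -
  assume a: "Suc (Suc s) \<le> length ws"
  have "drop s ws = ws!s # drop (Suc s) ws" using a by (simp add: Cons_nth_drop_Suc)
  moreover have "drop (Suc s) ws = ws!Suc s # drop (Suc (Suc s)) ws" using a by (simp add: Cons_nth_drop_Suc)
  ultimately show ?thesis by (metis append_Cons append_Nil append_take_drop_id)
qed

lemma split_card:
  assumes "length \<sigma>b = length \<sigma>" "length \<tau>b = length \<tau>"
  shows "card {ws. WF (\<sigma>@[m',n']@\<tau>) (\<sigma>b@[y]@\<tau>b) ws \<and> wcnt ws = c} =
    card {(ps,u,v,qs). WF \<sigma> (butlast \<sigma>b) ps \<and> WF \<tau> (tl \<tau>b) qs \<and> rowok m' u \<and> rowok n' v \<and>
    (\<sigma> \<noteq> [] \<longrightarrow> rel (last \<sigma>b) (last ps) u) \<and> rel y u v \<and> (\<tau> \<noteq> [] \<longrightarrow> rel (hd \<tau>b) v (hd qs)) \<and>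
    count (cnt4 ps u v qs) = c}" (is "card ?A = card ?B")
proof (rule sym, rule bij_betw_same_card[of "\<lambda>(ps,u,v,qs). ps@[u,v]@qs"],
       rule bij_betw_byWitness[where f'="\<lambda>ws. (take (length \<sigma>) ws, ws!length \<sigma>, ws!Suc (length \<sigma>), drop (Suc (Suc (length \<sigma>))) ws)"])
  show "\<forall>a\<in>?B. (\<lambda>ws. (take (length \<sigma>) ws, ws!length \<sigma>, ws!Suc (length \<sigma>), drop (Suc (Suc (length \<sigma>))) ws))
           ((\<lambda>(ps,u,v,qs). ps@[u,v]@qs) a) = a"
    using WF_len by (auto simp: nth_append)
  show "\<forall>a'\<in>?A. (\<lambda>(ps,u,v,qs). ps@[u,v]@qs)
          ((\<lambda>ws. (take (length \<sigma>) ws, ws!length \<sigma>, ws!Suc (length \<sigma>), drop (Suc (Suc (length \<sigma>))) ws)) a') = a'"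
  proof
    fix ws assume "ws \<in> ?A"
    then have "length ws = length \<sigma> + 2 + length \<tau>" using WF_len by fastforce
    then show "(\<lambda>(ps,u,v,qs). ps@[u,v]@qs)
          ((\<lambda>ws. (take (length \<sigma>) ws, ws!length \<sigma>, ws!Suc (length \<sigma>), drop (Suc (Suc (length \<sigma>))) ws)) ws) = ws"
      using join_split[of "length \<sigma>" ws] by simp
  qed
  show "(\<lambda>(ps,u,v,qs). ps@[u,v]@qs) ` ?B \<subseteq> ?A"
  proof (rule image_subsetI)
    fix z assume z: "z \<in> ?B"
    obtain ps u v qs where zz: "z = (ps,u,v,qs)" by (cases z) blast
    have h: "WF \<sigma> (butlast \<sigma>b) ps" "WF \<tau> (tl \<tau>b) qs" "rowok m' u" "rowok n' v"
      "\<sigma> \<noteq> [] \<longrightarrow> rel (last \<sigma>b) (last ps) u" "rel y u v" "\<tau> \<noteq> [] \<longrightarrow> rel (hd \<tau>b) v (hd qs)" "count (cnt4 ps u v qs) = c"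
      using z zz by auto
    have l: "length ps = length \<sigma>" "length qs = length \<tau>" using h(1,2) WF_len by auto
    have "WF (\<sigma>@[m',n']@\<tau>) (\<sigma>b@[y]@\<tau>b) (ps@[u,v]@qs)" using WF_split[OF assms l, of m' n' y u v] h by simp
    moreover have "wcnt (ps@[u,v]@qs) = c" using wcnt_join[of ps u v qs] h by simp
    ultimately show "(\<lambda>(ps,u,v,qs). ps@[u,v]@qs) z \<in> ?A" using zz by simp
  qed
  show "(\<lambda>ws. (take (length \<sigma>) ws, ws!length \<sigma>, ws!Suc (length \<sigma>), drop (Suc (Suc (length \<sigma>))) ws)) ` ?A \<subseteq> ?B"
  proof (rule image_subsetI)
    fix ws assume "ws \<in> ?A"
    then have W: "WF (\<sigma>@[m',n']@\<tau>) (\<sigma>b@[y]@\<tau>b) ws" and C: "wcnt ws = c" by auto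
    define s where "s = length \<sigma>"
    have lw: "length ws = s + 2 + length \<tau>" using WF_len[OF W] s_def by simp
    define ps where "ps = take s ws"
    define qs where "qs = drop (Suc (Suc s)) ws"
    have j: "ps @ [ws!s, ws!Suc s] @ qs = ws" unfolding ps_def qs_def using lw join_split[of s ws] by simp
    have l: "length ps = length \<sigma>" "length qs = length \<tau>" using lw unfolding ps_def qs_def s_def by auto
    have W2: "WF (\<sigma>@[m',n']@\<tau>) (\<sigma>b@[y]@\<tau>b) (ps@[ws!s, ws!Suc s]@qs)" using W j by simp
    have C2: "count (cnt4 ps (ws!s) (ws!Suc s) qs) = c" using C j wcnt_join[of ps "ws!s" "ws!Suc s" qs] by simp
    have "(ps, ws!s, ws!Suc s, qs) \<in> ?B" using WF_split[OF assms l, of m' n' y "ws!s" "ws!Suc s"] W2 C2 by simp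
    then show "(take (length \<sigma>) ws, ws!length \<sigma>, ws!Suc (length \<sigma>), drop (Suc (Suc (length \<sigma>))) ws) \<in> ?B"
      unfolding ps_def qs_def s_def by simp
  qed
qed

definition pos :: "nat list \<Rightarrow> bool" where "pos w \<longleftrightarrow> (\<forall>x\<in>set w. 0 < x)"

lemma rowok_iff: "rowok k w \<longleftrightarrow> length w = k \<and> sorted w \<and> pos w"
  unfolding rowok_def pos_def by simp

lemma pos2_mset: "mset u + mset v = mset P + mset Q \<Longrightarrow> (pos u \<and> pos v) = (pos P \<and> pos Q)"
proof -
  assume a: "mset u + mset v = mset P + mset Q"
  have "set u \<union> set v = set P \<union> set Q"
    using arg_cong[OF a, of set_mset] by simp
  then show ?thesis unfolding pos_def by blast
qed

lemma rel1_last: "u \<noteq> [] \<Longrightarrow> rel 1 R u \<longleftrightarrow> R!0 < last u"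
  unfolding rel_def by (simp add: last_conv_nth)

lemma rel1_hd: "v \<noteq> [] \<Longrightarrow> rel 1 v T \<longleftrightarrow> hd v < T!(length T - 1)"
  unfolding rel_def by (simp add: hd_conv_nth)

lemma sorted_snoc_iff: "u \<noteq> [] \<Longrightarrow> sorted (u@[h]) \<longleftrightarrow> sorted u \<and> last u \<le> h"
proof -
  assume u: "u \<noteq> []"
  have "sorted u \<Longrightarrow> (\<forall>x\<in>set u. x \<le> h) \<longleftrightarrow> last u \<le> h"
  proof
    assume "sorted u" "\<forall>x\<in>set u. x \<le> h" then show "last u \<le> h" using u by simp
  next
    assume s: "sorted u" "last u \<le> h"
    show "\<forall>x\<in>set u. x \<le> h"
    proof
      fix x assume "x \<in> set u"
      then obtain i where "i < length u" "x = u!i" by (auto simp: in_set_conv_nth)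
      then have "x \<le> last u" using sorted_nth_mono[OF s(1), of i "length u - 1"] u by (simp add: last_conv_nth)
      then show "x \<le> h" using s by simp
    qed
  qed
  then show ?thesis by (auto simp: sorted_append)
qed

lemma sorted_cons_iff: "v \<noteq> [] \<Longrightarrow> sorted (t#v) \<longleftrightarrow> sorted v \<and> t \<le> hd v"
proof -
  assume v: "v \<noteq> []"
  have "sorted v \<Longrightarrow> (\<forall>x\<in>set v. t \<le> x) \<longleftrightarrow> t \<le> hd v"
  proof
    assume "sorted v" "\<forall>x\<in>set v. t \<le> x" then show "t \<le> hd v" using v by simp
  next
    assume s: "sorted v" "t \<le> hd v"
    show "\<forall>x\<in>set v. t \<le> x"
    proof
      fix x assume "x \<in> set v"
      then obtain i where "i < length v" "x = v!i" by (auto simp: in_set_conv_nth)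
      then have "hd v \<le> x" using sorted_nth_mono[OF s(1), of 0 i] v by (simp add: hd_conv_nth)
      then show "t \<le> x" using s by simp
    qed
  qed
  then show ?thesis by auto
qed

lemma rowok_app: "length u = a \<Longrightarrow> u \<noteq> [] \<Longrightarrow> R \<noteq> [] \<Longrightarrow>
   rowok (a+b) (u@R) \<longleftrightarrow> rowok a u \<and> rowok b R \<and> last u \<le> R!0"
proof -
  assume l: "length u = a" and u: "u \<noteq> []" and R: "R \<noteq> []"
  have "sorted (u@R) \<longleftrightarrow> sorted u \<and> sorted R \<and> last u \<le> R!0"
  proof
    assume s: "sorted (u@R)"
    have "sorted u" "sorted R" using s by (auto simp: sorted_append)
    moreover have "last u \<le> R!0" using s u R by (auto simp: sorted_append)
    ultimately show "sorted u \<and> sorted R \<and> last u \<le> R!0" by simp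
  next
    assume s: "sorted u \<and> sorted R \<and> last u \<le> R!0"
    have "\<forall>x\<in>set u. \<forall>y\<in>set R. x \<le> y"
    proof (intro ballI)
      fix x y assume x: "x \<in> set u" and y: "y \<in> set R"
      from x obtain i where i: "i < length u" "x = u!i" by (auto simp: in_set_conv_nth)
      from y obtain j where j: "j < length R" "y = R!j" by (auto simp: in_set_conv_nth)
      have "x \<le> last u" using sorted_nth_mono[of u i "length u - 1"] s i u by (simp add: last_conv_nth)
      moreover have "R!0 \<le> y" using sorted_nth_mono[of R 0 j] s j by simp
      ultimately show "x \<le> y" using s by simp
    qed
    then show "sorted (u@R)" using s by (simp add: sorted_append)
  qed
  then show ?thesis unfolding rowok_def using l by auto
qed

lemma mset_concat_sub: "w \<in> set ws \<Longrightarrow> mset w \<subseteq># mset (concat ws)"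
  by (induction ws) (auto intro: subset_mset.order_trans[OF _ mset_subset_eq_add_right])

locale LS =
  fixes \<sigma> \<tau> \<sigma>b \<tau>b :: "nat list" and c :: "nat \<Rightarrow> nat"
  assumes SH: "standing_hyp \<sigma> \<tau> \<sigma>b \<tau>b"
begin

definition E :: "nat list list \<Rightarrow> nat list list \<Rightarrow> bool" where
  "E ps qs \<longleftrightarrow> WF \<sigma> (butlast \<sigma>b) ps \<and> WF \<tau> (tl \<tau>b) qs"
definition LU :: "nat list list \<Rightarrow> nat list \<Rightarrow> bool" where
  "LU ps u \<longleftrightarrow> (ps \<noteq> [] \<longrightarrow> rel 1 (last ps) u)"
definition LD :: "nat list \<Rightarrow> nat list list \<Rightarrow> bool" where
  "LD v qs \<longleftrightarrow> (qs \<noteq> [] \<longrightarrow> rel 1 v (hd qs))"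
definition Tup :: "(nat list list \<Rightarrow> nat list \<Rightarrow> nat list \<Rightarrow> nat list list \<Rightarrow> bool) \<Rightarrow>
     (nat list list \<times> nat list \<times> nat list \<times> nat list list) set" where
  "Tup P = {(ps,u,v,qs). E ps qs \<and> count (cnt4 ps u v qs) = c \<and> P ps u v qs}"

lemma E_len: "E ps qs \<Longrightarrow> length ps = length \<sigma> \<and> length qs = length \<tau>"
  unfolding E_def using WF_len by blast

lemma Tup_cong: "(\<And>ps u v qs. E ps qs \<Longrightarrow> P ps u v qs = P' ps u v qs) \<Longrightarrow> Tup P = Tup P'"
  unfolding Tup_def by auto

lemma Tup_fin: "finite (Tup P)"
proof -
  have sub: "Tup P \<subseteq> Tup (\<lambda>_ _ _ _. True)" unfolding Tup_def by auto
  have "finite (Tup (\<lambda>_ _ _ _. True))"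
  proof (cases "Tup (\<lambda>_ _ _ _. True) = {}")
    case True then show ?thesis by simp
  next
    case False
    then obtain z0 where z0: "z0 \<in> Tup (\<lambda>_ _ _ _. True)" by blast
    obtain ps0 u0 v0 qs0 where zz: "z0 = (ps0,u0,v0,qs0)" by (cases z0) blast
    define M0 where "M0 = cnt4 ps0 u0 v0 qs0"
    have cM0: "count M0 = c" using z0 zz unfolding Tup_def M0_def by simp
    define S where "S = set_mset M0"
    define N where "N = size M0"
    define L1 where "L1 = {w :: nat list. set w \<subseteq> S \<and> length w \<le> N}"
    define LL where "LL = {ws. set ws \<subseteq> L1 \<and> length ws \<le> length \<sigma> + length \<tau>}"
    have fL1: "finite L1" unfolding L1_def S_def by (rule finite_lists_length_le) simp
    have fLL: "finite LL" unfolding LL_def by (rule finite_lists_length_le[OF fL1])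
    have inL1: "w \<in> L1" if "mset w \<subseteq># M0" for w
    proof -
      have "set w \<subseteq> S" unfolding S_def using that by (metis set_mset_mono set_mset_mset)
      moreover have "length w \<le> N" unfolding N_def using that by (metis size_mset size_mset_mono)
      ultimately show ?thesis unfolding L1_def by simp
    qed
    have inLL: "ws \<in> LL" if "mset (concat ws) \<subseteq># M0" "length ws \<le> length \<sigma> + length \<tau>" for ws
    proof -
      have "w \<in> L1" if "w \<in> set ws" for w
        using inL1 mset_concat_sub[OF that] \<open>mset (concat ws) \<subseteq># M0\<close> by (meson subset_mset.order_trans)
      then show ?thesis unfolding LL_def using that by auto
    qed
    have "Tup (\<lambda>_ _ _ _. True) \<subseteq> LL \<times> L1 \<times> L1 \<times> LL"
    proof
      fix z assume z: "z \<in> Tup (\<lambda>_ _ _ _. True)"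
      obtain ps u v qs where zz: "z = (ps,u,v,qs)" by (cases z) blast
      have "count (cnt4 ps u v qs) = count M0" using z zz cM0 unfolding Tup_def by simp
      then have M: "M0 = mset (concat ps) + mset u + mset v + mset (concat qs)"
        unfolding cnt4_def by (metis multiset_eqI)
      have E: "E ps qs" using z zz unfolding Tup_def by simp
      have l: "length ps = length \<sigma>" "length qs = length \<tau>" using E_len[OF E] by auto
      have "mset (concat ps) \<subseteq># M0" "mset u \<subseteq># M0" "mset v \<subseteq># M0" "mset (concat qs) \<subseteq># M0"
        unfolding M by (simp_all add: subset_mset.add_increasing2 subset_mset.add_increasing)
      then show "z \<in> LL \<times> L1 \<times> L1 \<times> LL" using zz inL1 inLL l by simp
    qed
    then show ?thesis using fL1 fLL by (meson finite_SigmaI finite_subset)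
  qed
  then show ?thesis using sub finite_subset by blast
qed

lemma Tup_split: "card (Tup P) = card (Tup (\<lambda>a b d e. P a b d e \<and> Q a b d e)) + card (Tup (\<lambda>a b d e. P a b d e \<and> \<not> Q a b d e))"
proof -
  have "Tup P = Tup (\<lambda>a b d e. P a b d e \<and> Q a b d e) \<union> Tup (\<lambda>a b d e. P a b d e \<and> \<not> Q a b d e)"
    unfolding Tup_def by auto
  moreover have "Tup (\<lambda>a b d e. P a b d e \<and> Q a b d e) \<inter> Tup (\<lambda>a b d e. P a b d e \<and> \<not> Q a b d e) = {}"
    unfolding Tup_def by auto
  ultimately show ?thesis using Tup_fin by (simp add: card_Un_disjoint)
qed


lemma cnt4_eq: "mset u + mset v = mset u' + mset v' \<Longrightarrow> cnt4 p u v q = cnt4 p u' v' q"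
  unfolding cnt4_def by (simp add: add.assoc)

definition All :: "nat \<Rightarrow> nat \<Rightarrow> _" where
  "All m n = Tup (\<lambda>ps u v qs. rowok m u \<and> rowok n v \<and> LU ps u \<and> LD v qs)"
definition F :: "nat \<Rightarrow> nat \<Rightarrow> nat \<Rightarrow> _" where
  "F m n x = Tup (\<lambda>ps u v qs. rowok m u \<and> rowok n v \<and> LU ps u \<and> LD v qs \<and> rel x u v)"
definition Bad :: "nat \<Rightarrow> nat \<Rightarrow> nat \<Rightarrow> _" where
  "Bad m n x = Tup (\<lambda>ps u v qs. rowok m u \<and> rowok n v \<and> LU ps u \<and> LD v qs \<and> \<not> rel x u v)"
definition PQ :: "nat \<Rightarrow> nat \<Rightarrow> _" where
  "PQ p q = Tup (\<lambda>ps u v qs. rowok p u \<and> rowok q v \<and> LU ps u \<and> LD u qs)"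

lemma All_split: "card (All m n) = card (F m n x) + card (Bad m n x)"
  unfolding All_def F_def Bad_def
  using Tup_split[of "\<lambda>ps u v qs. rowok m u \<and> rowok n v \<and> LU ps u \<and> LD v qs" "\<lambda>ps u v qs. rel x u v"]
  by (simp add: conj_assoc)

lemma Bad_PQ:
  assumes x: "1 \<le> x" "x \<le> m" "x \<le> n"
  shows "card (Bad m n x) = card (PQ (m+n-x+1) (x-1))"
proof -
  define X where "X p u v q \<longleftrightarrow> E p q \<and> count (cnt4 p u v q) = c \<and> pos u \<and> pos v \<and> LU p u \<and> LD v q" for p u v q
  define Y where "Y p u v q \<longleftrightarrow> E p q \<and> count (cnt4 p u v q) = c \<and> pos u \<and> pos v \<and> LU p u \<and> LD u q" for p u v q
  have b: "Bad m n x = {(p,u,v,q). (u,v) \<in> LA m n x \<and> X p u v q}"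
  proof (rule set_eqI)
    fix z :: "nat list list \<times> nat list \<times> nat list \<times> nat list list"
    obtain p u v q where zz: "z = (p,u,v,q)" by (cases z) blast
    show "z \<in> Bad m n x \<longleftrightarrow> z \<in> {(p,u,v,q). (u,v) \<in> LA m n x \<and> X p u v q}"
      unfolding zz Bad_def Tup_def LA_def X_def rowok_iff by auto
  qed
  have pq: "PQ (m+n-x+1) (x-1) = {(p,u,v,q). (u,v) \<in> LB (m+n-x+1) (x-1) \<and> Y p u v q}"
  proof (rule set_eqI)
    fix z :: "nat list list \<times> nat list \<times> nat list \<times> nat list list"
    obtain p u v q where zz: "z = (p,u,v,q)" by (cases z) blast
    show "z \<in> PQ (m+n-x+1) (x-1) \<longleftrightarrow> z \<in> {(p,u,v,q). (u,v) \<in> LB (m+n-x+1) (x-1) \<and> Y p u v q}"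
      unfolding zz PQ_def Tup_def LB_def Y_def rowok_iff by auto
  qed
  have XY: "X p u v q = Y p (fst (phi x (n-x) (u,v))) (snd (phi x (n-x) (u,v))) q" if uv: "(u,v) \<in> LA m n x" for p q u v
  proof -
    obtain P Q where r: "phi x (n-x) (u,v) = (P,Q)" by force
    have pp: "(P,Q) \<in> LB (m+n-x+1) (x-1)" "mset P + mset Q = mset u + mset v" "last P = last u" "hd P = hd v"
      using phi_props[OF x uv] r by auto
    have ne: "u \<noteq> []" "v \<noteq> []" "P \<noteq> []" using uv pp(1) x unfolding LA_def LB_def by auto
    have "LU p u = LU p P" unfolding LU_def using rel1_last ne pp(3) by simp
    moreover have "LD v q = LD P q" unfolding LD_def using rel1_hd ne pp(4) by simp
    moreover have "cnt4 p u v q = cnt4 p P Q q" by (rule cnt4_eq[OF pp(2)[symmetric]])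
    moreover have "(pos u \<and> pos v) = (pos P \<and> pos Q)" by (rule pos2_mset[OF pp(2)[symmetric]])
    ultimately show ?thesis unfolding X_def Y_def r by auto
  qed
  have "bij_betw (\<lambda>(p,u,v,q). (p, fst (phi x (n-x) (u,v)), snd (phi x (n-x) (u,v)), q))
     {(p,u,v,q). (u,v) \<in> LA m n x \<and> X p u v q} {(p,u,v,q). (u,v) \<in> LB (m+n-x+1) (x-1) \<and> Y p u v q}"
    apply (rule lift4[where f="\<lambda>p q. phi x (n-x)" and A="\<lambda>p q. LA m n x" and B="\<lambda>p q. LB (m+n-x+1) (x-1)" and X=X and Y=Y])
    using lgv_bij[OF x] XY by auto
  then show ?thesis unfolding b pq by (rule bij_betw_same_card)
qed

lemma Bad0: "Bad m n 0 = {}" unfolding Bad_def Tup_def rel_def by simp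

lemma K:
  assumes "1 \<le> m" "2 \<le> n" "x \<le> m" "x \<le> n - 1"
  shows "int (card (F m n x)) - int (card (F (m+1) (n-1) x)) = int (card (All m n)) - int (card (All (m+1) (n-1)))"
proof -
  have "card (Bad m n x) = card (Bad (m+1) (n-1) x)"
  proof (cases "x = 0")
    case True then show ?thesis using Bad0 by simp
  next
    case False
    then have "card (Bad m n x) = card (PQ (m+n-x+1) (x-1))" using Bad_PQ[of x m n] assms by simp
    moreover have "card (Bad (m+1) (n-1) x) = card (PQ ((m+1)+(n-1)-x+1) (x-1))" using Bad_PQ[of x "m+1" "n-1"] assms False by simp
    moreover have "(m+1)+(n-1)-x+1 = m+n-x+1" using assms by simp
    ultimately show ?thesis by simp
  qed
  then show ?thesis using All_split[of m n x] All_split[of "m+1" "n-1" x] by simp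
qed

definition MS :: "nat \<Rightarrow> nat \<Rightarrow> _" where
  "MS m n = Tup (\<lambda>ps u v qs. rowok m u \<and> rowok n v \<and> ps \<noteq> [] \<and> \<not> rel 1 (last ps) u \<and> LD v qs \<and> rel (m+1) (u @ [last ps ! 0]) v)"

lemma SIG:
  assumes m: "1 \<le> m" "m+1 \<le> n"
  shows "card (All m n) + card (MS m n) = card (PQ n m)"
proof -
  define Z where "Z = Tup (\<lambda>ps u v qs. rowok m u \<and> rowok n v \<and> LD v qs)"
  define Z' where "Z' = Tup (\<lambda>ps u v qs. rowok n u \<and> rowok m v \<and> LD u qs)"
  define AllM where "AllM = Tup (\<lambda>ps u v qs. (rowok m u \<and> rowok n v \<and> LD v qs) \<and> \<not> LU ps u)"
  define BadM where "BadM = Tup (\<lambda>ps u v qs. ((rowok m u \<and> rowok n v \<and> LD v qs) \<and> \<not> LU ps u) \<and> \<not> rel (m+1) (u @ [last ps ! 0]) v)"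
  define PQM where "PQM = Tup (\<lambda>ps u v qs. (rowok n u \<and> rowok m v \<and> LD u qs) \<and> \<not> LU ps u)"
  have c1: "card Z = card (All m n) + card AllM"
  proof -
    have "Tup (\<lambda>ps u v qs. (rowok m u \<and> rowok n v \<and> LD v qs) \<and> LU ps u) = All m n"
      unfolding All_def by (rule Tup_cong) auto
    then show ?thesis unfolding Z_def AllM_def
      using Tup_split[of "\<lambda>ps u v qs. rowok m u \<and> rowok n v \<and> LD v qs" "\<lambda>ps u v qs. LU ps u"] by simp
  qed
  have c2: "card AllM = card (MS m n) + card BadM"
  proof -
    have "MS m n = Tup (\<lambda>ps u v qs. ((rowok m u \<and> rowok n v \<and> LD v qs) \<and> \<not> LU ps u) \<and> rel (m+1) (u @ [last ps ! 0]) v)"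
      unfolding MS_def LU_def by (rule Tup_cong) auto
    then show ?thesis unfolding AllM_def BadM_def
      using Tup_split[of "\<lambda>ps u v qs. (rowok m u \<and> rowok n v \<and> LD v qs) \<and> \<not> LU ps u" "\<lambda>ps u v qs. rel (m+1) (u @ [last ps ! 0]) v"] by simp
  qed
  have c3: "card Z' = card (PQ n m) + card PQM"
  proof -
    have "Tup (\<lambda>ps u v qs. (rowok n u \<and> rowok m v \<and> LD u qs) \<and> LU ps u) = PQ n m"
      unfolding PQ_def by (rule Tup_cong) auto
    then show ?thesis unfolding Z'_def PQM_def
      using Tup_split[of "\<lambda>ps u v qs. rowok n u \<and> rowok m v \<and> LD u qs" "\<lambda>ps u v qs. LU ps u"] by simp
  qed
  have c4: "card Z = card Z'"
  proof (rule bij_betw_same_card[of "\<lambda>(p,u,v,q). (p,v,u,q)"], rule bij_betw_byWitness[where f'="\<lambda>(p,u,v,q). (p,v,u,q)"])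
    have cs: "\<And>p u v q. cnt4 p u v q = cnt4 p v u q" unfolding cnt4_def by (simp add: ac_simps)
    show "\<forall>a\<in>Z. (\<lambda>(p,u,v,q). (p,v,u,q)) ((\<lambda>(p,u,v,q). (p,v,u,q)) a) = a" by auto
    show "\<forall>a'\<in>Z'. (\<lambda>(p,u,v,q). (p,v,u,q)) ((\<lambda>(p,u,v,q). (p,v,u,q)) a') = a'" by auto
    show "(\<lambda>(p,u,v,q). (p,v,u,q)) ` Z \<subseteq> Z'" unfolding Z_def Z'_def Tup_def using cs by auto
    show "(\<lambda>(p,u,v,q). (p,v,u,q)) ` Z' \<subseteq> Z" unfolding Z_def Z'_def Tup_def using cs by auto
  qed
  have c5: "card BadM = card PQM"
  proof -
    define X where "X p u v q \<longleftrightarrow> E p q \<and> count (cnt4 p u v q) = c \<and> pos u \<and> pos v \<and> p \<noteq> [] \<and> LD v q" for p u v q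
    define Y where "Y p u v q \<longleftrightarrow> E p q \<and> count (cnt4 p u v q) = c \<and> pos u \<and> pos v \<and> p \<noteq> [] \<and> LD u q" for p u v q
    have b: "BadM = {(p,u,v,q). (u,v) \<in> AS (last p ! 0) m n \<and> X p u v q}"
    proof -
      have that_eq: "\<And>(u::nat list) (p::nat list list) (v::nat list). length u = m \<Longrightarrow> (sorted u \<and> \<not> LU p u) = (sorted (u @ [last p ! 0]) \<and> p \<noteq> [])"
      proof -
        fix u v :: "nat list" and p :: "nat list list" assume "length u = m"
        then have u: "u \<noteq> []" using m by auto
        show "(sorted u \<and> \<not> LU p u) = (sorted (u @ [last p ! 0]) \<and> p \<noteq> [])"
          unfolding LU_def rel1_last[OF u] sorted_snoc_iff[OF u] by auto
      qed
then show ?thesis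
      proof (intro set_eqI)
        fix z :: "nat list list \<times> nat list \<times> nat list \<times> nat list list"
        obtain p u v q where zz: "z = (p,u,v,q)" by (cases z) blast
        show "z \<in> BadM \<longleftrightarrow> z \<in> {(p,u,v,q). (u,v) \<in> AS (last p ! 0) m n \<and> X p u v q}"
          using that_eq[of u p] unfolding zz BadM_def Tup_def AS_def X_def rowok_iff by auto
      qed
    qed
    have pq: "PQM = {(p,u,v,q). (u,v) \<in> BS (last p ! 0) m n \<and> Y p u v q}"
    proof -
      have that_eq: "\<And>(u::nat list) (p::nat list list) (v::nat list). length u = n \<Longrightarrow> (sorted u \<and> \<not> LU p u) = (sorted (u @ [last p ! 0]) \<and> p \<noteq> [])"
      proof -
        fix u v :: "nat list" and p :: "nat list list" assume "length u = n"
        then have u: "u \<noteq> []" using m by auto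
        show "(sorted u \<and> \<not> LU p u) = (sorted (u @ [last p ! 0]) \<and> p \<noteq> [])"
          unfolding LU_def rel1_last[OF u] sorted_snoc_iff[OF u] by auto
      qed
then show ?thesis
      proof (intro set_eqI)
        fix z :: "nat list list \<times> nat list \<times> nat list \<times> nat list list"
        obtain p u v q where zz: "z = (p,u,v,q)" by (cases z) blast
        show "z \<in> PQM \<longleftrightarrow> z \<in> {(p,u,v,q). (u,v) \<in> BS (last p ! 0) m n \<and> Y p u v q}"
          using that_eq[of u p] unfolding zz PQM_def Tup_def BS_def Y_def rowok_iff by auto
      qed
    qed
    have XY: "X p u v q = Y p (fst (fS (last p ! 0) m n (u,v))) (snd (fS (last p ! 0) m n (u,v))) q"
      if uv: "(u,v) \<in> AS (last p ! 0) m n" for p q u v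
    proof -
      obtain P Q where r: "fS (last p ! 0) m n (u,v) = (P,Q)" by force
      have pp: "(P,Q) \<in> BS (last p ! 0) m n" "mset P + mset Q = mset u + mset v" "hd P = hd v"
        using fS_props[OF m(2) uv] r by auto
      have ne: "v \<noteq> []" "P \<noteq> []" using uv pp(1) m unfolding AS_def BS_def by auto
      have "LD v q = LD P q" unfolding LD_def using rel1_hd ne pp(3) by simp
      moreover have "cnt4 p u v q = cnt4 p P Q q" by (rule cnt4_eq[OF pp(2)[symmetric]])
      moreover have "(pos u \<and> pos v) = (pos P \<and> pos Q)" by (rule pos2_mset[OF pp(2)[symmetric]])
      ultimately show ?thesis unfolding X_def Y_def r by auto
    qed
    have "bij_betw (\<lambda>(p,u,v,q). (p, fst (fS (last p ! 0) m n (u,v)), snd (fS (last p ! 0) m n (u,v)), q))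
       {(p,u,v,q). (u,v) \<in> AS (last p ! 0) m n \<and> X p u v q} {(p,u,v,q). (u,v) \<in> BS (last p ! 0) m n \<and> Y p u v q}"
      apply (rule lift4[where f="\<lambda>p q. fS (last p ! 0) m n" and A="\<lambda>p q. AS (last p ! 0) m n" and B="\<lambda>p q. BS (last p ! 0) m n" and X=X and Y=Y])
      using fS_bij m XY by auto
    then show ?thesis unfolding b pq by (rule bij_betw_same_card)
  qed
  show ?thesis using c1 c2 c3 c4 c5 by simp
qed

definition lastT :: "nat list list \<Rightarrow> nat" where "lastT qs = hd qs ! (length (hd qs) - 1)"

definition MT :: "nat \<Rightarrow> nat \<Rightarrow> _" where
  "MT m n = Tup (\<lambda>ps u v qs. rowok (m+1) u \<and> rowok (n-1) v \<and> LU ps u \<and> qs \<noteq> [] \<and> \<not> rel 1 v (hd qs) \<and> rel n u (lastT qs # v))"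

lemma TAU:
  assumes m: "1 \<le> m" "2 \<le> n" "n \<le> m+1"
  shows "card (PQ (m+1) (n-1)) = card (All (m+1) (n-1)) + card (MT m n)"
proof -
  define Y where "Y = Tup (\<lambda>ps u v qs. rowok (m+1) u \<and> rowok (n-1) v \<and> LU ps u)"
  define AllT where "AllT = Tup (\<lambda>ps u v qs. (rowok (m+1) u \<and> rowok (n-1) v \<and> LU ps u) \<and> \<not> LD v qs)"
  define BadT where "BadT = Tup (\<lambda>ps u v qs. ((rowok (m+1) u \<and> rowok (n-1) v \<and> LU ps u) \<and> \<not> LD v qs) \<and> \<not> rel n u (lastT qs # v))"
  define PQT where "PQT = Tup (\<lambda>ps u v qs. (rowok (m+1) u \<and> rowok (n-1) v \<and> LU ps u) \<and> \<not> LD u qs)"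
  have c1: "card Y = card (All (m+1) (n-1)) + card AllT"
  proof -
    have "Tup (\<lambda>ps u v qs. (rowok (m+1) u \<and> rowok (n-1) v \<and> LU ps u) \<and> LD v qs) = All (m+1) (n-1)"
      unfolding All_def by (rule Tup_cong) auto
    then show ?thesis unfolding Y_def AllT_def
      using Tup_split[of "\<lambda>ps u v qs. rowok (m+1) u \<and> rowok (n-1) v \<and> LU ps u" "\<lambda>ps u v qs. LD v qs"] by simp
  qed
  have c2: "card AllT = card (MT m n) + card BadT"
  proof -
    have "MT m n = Tup (\<lambda>ps u v qs. ((rowok (m+1) u \<and> rowok (n-1) v \<and> LU ps u) \<and> \<not> LD v qs) \<and> rel n u (lastT qs # v))"
      unfolding MT_def LD_def by (rule Tup_cong) auto
    then show ?thesis unfolding AllT_def BadT_def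
      using Tup_split[of "\<lambda>ps u v qs. (rowok (m+1) u \<and> rowok (n-1) v \<and> LU ps u) \<and> \<not> LD v qs" "\<lambda>ps u v qs. rel n u (lastT qs # v)"] by simp
  qed
  have c3: "card Y = card (PQ (m+1) (n-1)) + card PQT"
  proof -
    have "Tup (\<lambda>ps u v qs. (rowok (m+1) u \<and> rowok (n-1) v \<and> LU ps u) \<and> LD u qs) = PQ (m+1) (n-1)"
      unfolding PQ_def by (rule Tup_cong) auto
    then show ?thesis unfolding Y_def PQT_def
      using Tup_split[of "\<lambda>ps u v qs. rowok (m+1) u \<and> rowok (n-1) v \<and> LU ps u" "\<lambda>ps u v qs. LD u qs"] by simp
  qed
  have c5: "card BadT = card PQT"
  proof -
    define X where "X p u v q \<longleftrightarrow> E p q \<and> count (cnt4 p u v q) = c \<and> pos u \<and> pos v \<and> LU p u \<and> q \<noteq> []" for p u v q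
    have b: "BadT = {(p,u,v,q). (u,v) \<in> AT (lastT q) m n \<and> X p u v q}"
    proof -
      have that_eq: "\<And>(v::nat list) (q::nat list list). length v = n - 1 \<Longrightarrow> (sorted v \<and> \<not> LD v q) = (sorted (lastT q # v) \<and> q \<noteq> [])"
      proof -
        fix v :: "nat list" and q :: "nat list list" assume "length v = n - 1"
        then have v: "v \<noteq> []" using m by auto
        show "(sorted v \<and> \<not> LD v q) = (sorted (lastT q # v) \<and> q \<noteq> [])"
          unfolding LD_def rel1_hd[OF v] sorted_cons_iff[OF v] lastT_def by auto
      qed
then show ?thesis
      proof (intro set_eqI)
        fix z :: "nat list list \<times> nat list \<times> nat list \<times> nat list list"
        obtain p u v q where zz: "z = (p,u,v,q)" by (cases z) blast
        show "z \<in> BadT \<longleftrightarrow> z \<in> {(p,u,v,q). (u,v) \<in> AT (lastT q) m n \<and> X p u v q}"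
          using that_eq[of v q] unfolding zz BadT_def Tup_def AT_def X_def rowok_iff by auto
      qed
    qed
    have pq: "PQT = {(p,u,v,q). (u,v) \<in> BT (lastT q) m n \<and> X p u v q}"
    proof -
      have that_eq: "\<And>(v::nat list) (q::nat list list). length v = m + 1 \<Longrightarrow> (sorted v \<and> \<not> LD v q) = (sorted (lastT q # v) \<and> q \<noteq> [])"
      proof -
        fix v :: "nat list" and q :: "nat list list" assume "length v = m + 1"
        then have v: "v \<noteq> []" by auto
        show "(sorted v \<and> \<not> LD v q) = (sorted (lastT q # v) \<and> q \<noteq> [])"
          unfolding LD_def rel1_hd[OF v] sorted_cons_iff[OF v] lastT_def by auto
      qed
then show ?thesis
      proof (intro set_eqI)
        fix z :: "nat list list \<times> nat list \<times> nat list \<times> nat list list"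
        obtain p u v q where zz: "z = (p,u,v,q)" by (cases z) blast
        show "z \<in> PQT \<longleftrightarrow> z \<in> {(p,u,v,q). (u,v) \<in> BT (lastT q) m n \<and> X p u v q}"
          using that_eq[of u q] unfolding zz PQT_def Tup_def BT_def X_def rowok_iff by auto
      qed
    qed
    have XY: "X p u v q = X p (fst (fT (lastT q) m n (u,v))) (snd (fT (lastT q) m n (u,v))) q"
      if uv: "(u,v) \<in> AT (lastT q) m n" for p q u v
    proof -
      obtain P Q where r: "fT (lastT q) m n (u,v) = (P,Q)" by force
      have pp: "(P,Q) \<in> BT (lastT q) m n" "mset P + mset Q = mset u + mset v" "last P = last u"
        using fT_props[of n m u v "lastT q"] m uv r by auto
      have ne: "u \<noteq> []" "P \<noteq> []" using uv pp(1) m unfolding AT_def BT_def by auto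
      have "LU p u = LU p P" unfolding LU_def using rel1_last ne pp(3) by simp
      moreover have "cnt4 p u v q = cnt4 p P Q q" by (rule cnt4_eq[OF pp(2)[symmetric]])
      moreover have "(pos u \<and> pos v) = (pos P \<and> pos Q)" by (rule pos2_mset[OF pp(2)[symmetric]])
      ultimately show ?thesis unfolding X_def r by auto
    qed
    have "bij_betw (\<lambda>(p,u,v,q). (p, fst (fT (lastT q) m n (u,v)), snd (fT (lastT q) m n (u,v)), q))
       {(p,u,v,q). (u,v) \<in> AT (lastT q) m n \<and> X p u v q} {(p,u,v,q). (u,v) \<in> BT (lastT q) m n \<and> X p u v q}"
      apply (rule lift4[where f="\<lambda>p q. fT (lastT q) m n" and A="\<lambda>p q. AT (lastT q) m n" and B="\<lambda>p q. BT (lastT q) m n" and X=X and Y=X])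
      using fT_bij m XY by auto
    then show ?thesis unfolding b pq by (rule bij_betw_same_card)
  qed
  show ?thesis using c1 c2 c3 c5 by simp
qed

end

lemma nth_A: "(\<sigma> @ a # b # \<tau>) ! i = (if i < length \<sigma> then \<sigma>!i else if i = length \<sigma> then a
     else if i = Suc (length \<sigma>) then b else \<tau>!(i - length \<sigma> - 2))"
  by (auto simp: nth_append nth_Cons' numeral_2_eq_2)

lemma nth_B: "(\<sigma>b @ y # \<tau>b) ! i = (if i < length \<sigma>b then \<sigma>b!i else if i = length \<sigma>b then y
     else \<tau>b!(i - length \<sigma>b - 1))"
  by (auto simp: nth_append nth_Cons')

lemma valid_split:
  assumes l: "length \<sigma>b = length \<sigma>" "length \<tau>b = length \<tau>"
    and Vs: "\<And>i. Suc i < length \<sigma> \<Longrightarrow> \<sigma>b!i \<le> \<sigma>!i \<and> \<sigma>b!i \<le> \<sigma>!Suc i"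
    and Ls: "\<sigma> \<noteq> [] \<Longrightarrow> last \<sigma>b \<le> last \<sigma> \<and> last \<sigma>b \<le> m'"
    and y: "y \<le> m'" "y \<le> n'"
    and Lt: "\<tau> \<noteq> [] \<Longrightarrow> hd \<tau>b \<le> n' \<and> hd \<tau>b \<le> hd \<tau>"
    and Vt: "\<And>i. 0 < i \<Longrightarrow> i < length \<tau> \<Longrightarrow> \<tau>b!i \<le> \<tau>!i \<and> \<tau>b!i \<le> \<tau>!(i-1)"
  shows "valid (\<sigma>@[m',n']@\<tau>) (\<sigma>b@[y]@\<tau>b)"
proof -
  have "\<forall>i. Suc i < length (\<sigma>@[m',n']@\<tau>) \<longrightarrow> (\<sigma>b@[y]@\<tau>b)!i \<le> (\<sigma>@[m',n']@\<tau>)!i \<and> (\<sigma>b@[y]@\<tau>b)!i \<le> (\<sigma>@[m',n']@\<tau>)!Suc i"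
  proof (intro allI impI)
  fix i assume i: "Suc i < length (\<sigma>@[m',n']@\<tau>)"
  define s where "s = length \<sigma>"
  have A: "\<And>j. (\<sigma>@[m',n']@\<tau>)!j = (if j < s then \<sigma>!j else if j = s then m' else if j = Suc s then n' else \<tau>!(j - s - 2))"
    using nth_A[of \<sigma> m' n' \<tau>] s_def by simp
  have B: "\<And>j. (\<sigma>b@[y]@\<tau>b)!j = (if j < s then \<sigma>b!j else if j = s then y else \<tau>b!(j - s - 1))"
    using nth_B[of \<sigma>b y \<tau>b] s_def l by simp
  have it: "i < s + 1 + length \<tau>" using i s_def by simp
  consider "Suc i < s" | "Suc i = s" | "i = s" | "i = Suc s" | "Suc s < i" by linarith
  then show "(\<sigma>b@[y]@\<tau>b)!i \<le> (\<sigma>@[m',n']@\<tau>)!i \<and> (\<sigma>b@[y]@\<tau>b)!i \<le> (\<sigma>@[m',n']@\<tau>)!Suc i"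
  proof cases
    case 1 then show ?thesis using A B Vs s_def by simp
  next
    case 2
    then have ne: "\<sigma> \<noteq> []" using s_def by auto
    have ii: "i = length \<sigma> - 1" "i = length \<sigma>b - 1" using 2 l s_def by auto
    have neb: "\<sigma>b \<noteq> []" using l ne by auto
    have "last \<sigma>b = \<sigma>b!i" "last \<sigma> = \<sigma>!i" using ii ne neb by (auto simp: last_conv_nth)
    then show ?thesis using A B Ls[OF ne] 2 by simp
  next
    case 3 then show ?thesis using A B y by simp
  next
    case 4
    then have ne: "\<tau> \<noteq> []" using it by auto
    have "\<tau>b \<noteq> []" using ne l by auto
    then have "hd \<tau>b = \<tau>b!0" "hd \<tau> = \<tau>!0" using ne by (auto simp: hd_conv_nth)
    then show ?thesis using A B Lt[OF ne] 4 by simp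
  next
    case 5
    define k where "k = i - s - 1"
    have k: "0 < k" "k < length \<tau>" "i - s - 2 = k - 1" "Suc i - s - 2 = k" using 5 it k_def by auto
    then show ?thesis using A B Vt[OF k(1,2)] 5 k_def by simp
  qed
  qed
  then show ?thesis unfolding valid_def using l by simp
qed

lemma rel_cong_left: "(\<And>k. k < y \<Longrightarrow> A!k = B!k) \<Longrightarrow> rel y A V = rel y B V"
  unfolding rel_def by simp

lemma rel_cong_right: "(\<And>k. k < y \<Longrightarrow> V!(k + length V - y) = W!(k + length W - y)) \<Longrightarrow> rel y A V = rel y A W"
  unfolding rel_def by simp


context LS begin

lemma SHf:
  shows pos_s: "\<And>a. a \<in> set \<sigma> \<Longrightarrow> 1 \<le> a" and pos_t: "\<And>a. a \<in> set \<tau> \<Longrightarrow> 1 \<le> a"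
    and lsb: "length \<sigma>b = length \<sigma>" and ltb: "length \<tau>b = length \<tau>"
    and lastsb: "\<sigma> \<noteq> [] \<Longrightarrow> last \<sigma>b = 1" and hdtb: "\<tau> \<noteq> [] \<Longrightarrow> hd \<tau>b = 1"
    and Vs: "\<And>i. Suc i < length \<sigma> \<Longrightarrow> \<sigma>b!i \<le> \<sigma>!i \<and> \<sigma>b!i \<le> \<sigma>!Suc i"
    and Vt: "\<And>i. 0 < i \<Longrightarrow> i < length \<tau> \<Longrightarrow> \<tau>b!i \<le> \<tau>!i \<and> \<tau>b!i \<le> \<tau>!(i-1)"
  using SH unfolding standing_hyp_def by auto

lemma E_ne: "E ps qs \<Longrightarrow> (ps \<noteq> [] \<longleftrightarrow> \<sigma> \<noteq> []) \<and> (qs \<noteq> [] \<longleftrightarrow> \<tau> \<noteq> [])"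
  using E_len by fastforce

lemma F_ov:
  assumes "1 \<le> m'" "1 \<le> n'" "y \<le> m'" "y \<le> n'"
  shows "ov_schur (\<sigma>@[m',n']@\<tau>) (\<sigma>b@[y]@\<tau>b) c = int (card (F m' n' y))"
proof -
  have V: "valid (\<sigma>@[m',n']@\<tau>) (\<sigma>b@[y]@\<tau>b)"
  proof (rule valid_split[OF lsb ltb Vs _ assms(3,4) _ Vt])
    assume ne: "\<sigma> \<noteq> []"
    have "1 \<le> last \<sigma>" using pos_s ne by simp
    then show "last \<sigma>b \<le> last \<sigma> \<and> last \<sigma>b \<le> m'" using lastsb[OF ne] assms by simp
  next
    assume ne: "\<tau> \<noteq> []"
    have "1 \<le> hd \<tau>" using pos_t ne by simp
    then show "hd \<tau>b \<le> n' \<and> hd \<tau>b \<le> hd \<tau>" using hdtb[OF ne] assms by simp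
  qed (auto)
  have "{(ps,u,v,qs). WF \<sigma> (butlast \<sigma>b) ps \<and> WF \<tau> (tl \<tau>b) qs \<and> rowok m' u \<and> rowok n' v \<and>
    (\<sigma> \<noteq> [] \<longrightarrow> rel (last \<sigma>b) (last ps) u) \<and> rel y u v \<and> (\<tau> \<noteq> [] \<longrightarrow> rel (hd \<tau>b) v (hd qs)) \<and>
    count (cnt4 ps u v qs) = c} = F m' n' y"
  proof (rule set_eqI)
    fix z :: "nat list list \<times> nat list \<times> nat list \<times> nat list list"
    obtain ps u v qs where zz: "z = (ps,u,v,qs)" by (cases z) blast
    show "z \<in> {(ps,u,v,qs). WF \<sigma> (butlast \<sigma>b) ps \<and> WF \<tau> (tl \<tau>b) qs \<and> rowok m' u \<and> rowok n' v \<and>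
    (\<sigma> \<noteq> [] \<longrightarrow> rel (last \<sigma>b) (last ps) u) \<and> rel y u v \<and> (\<tau> \<noteq> [] \<longrightarrow> rel (hd \<tau>b) v (hd qs)) \<and>
    count (cnt4 ps u v qs) = c} \<longleftrightarrow> z \<in> F m' n' y"
      unfolding zz F_def Tup_def LU_def LD_def using E_ne[of ps qs] lastsb hdtb by (auto simp: E_def)
  qed
  then show ?thesis using ov_schur_card[OF V] split_card[OF lsb ltb, of m' n' y c] by simp
qed


lemma last_butlast_nth: "length xs \<ge> 2 \<Longrightarrow> last (butlast xs) = xs ! (length xs - 2)"
proof -
  assume a: "length xs \<ge> 2"
  then have b: "butlast xs \<noteq> []" by (cases xs rule: rev_cases) auto
  have "last (butlast xs) = butlast xs ! (length (butlast xs) - 1)" using b by (simp add: last_conv_nth)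
  also have "\<dots> = xs ! (length xs - 2)" using a by (simp add: nth_butlast numeral_2_eq_2)
  finally show ?thesis .
qed

definition SM :: "nat \<Rightarrow> nat \<Rightarrow> _" where
  "SM m n = {(ps,u,v,qs). WF (butlast \<sigma>) (butlast (butlast \<sigma>b)) ps \<and> WF \<tau> (tl \<tau>b) qs \<and> rowok (m + last \<sigma>) u \<and> rowok n v \<and>
    (butlast \<sigma> \<noteq> [] \<longrightarrow> rel (last (butlast \<sigma>b)) (last ps) u) \<and> rel (m+1) u v \<and> (\<tau> \<noteq> [] \<longrightarrow> rel (hd \<tau>b) v (hd qs)) \<and>
    count (cnt4 ps u v qs) = c}"

lemma MS_pt:
  assumes ne: "\<sigma> \<noteq> []" and m: "1 \<le> m" and lu: "length u = m"
  shows "(ps'@[R], u, v, qs) \<in> MS m n \<longleftrightarrow> (ps', u@R, v, qs) \<in> SM m n"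
proof -
  define s where "s = length \<sigma>"
  have ls: "1 \<le> last \<sigma>" using pos_s ne by simp
  have sig: "\<sigma> = butlast \<sigma> @ [last \<sigma>]" using ne by simp
  have lbb: "length (butlast \<sigma>b) = length (butlast \<sigma>)" using lsb by simp
  have u: "u \<noteq> []" using lu m by auto
  have LDq: "WF \<tau> (tl \<tau>b) qs \<Longrightarrow> LD v qs = (\<tau> \<noteq> [] \<longrightarrow> rel (hd \<tau>b) v (hd qs))"
    unfolding LD_def using WF_len[of \<tau> "tl \<tau>b" qs] hdtb by fastforce
  have cn: "cnt4 (ps'@[R]) u v qs = cnt4 ps' (u@R) v qs" unfolding cnt4_def by (simp add: ac_simps)
  have g: "butlast \<sigma> \<noteq> [] \<Longrightarrow> last (butlast \<sigma>b) \<le> last \<sigma>"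
  proof -
    assume b: "butlast \<sigma> \<noteq> []"
    then have "length (butlast \<sigma>) \<noteq> 0" by (metis length_0_conv)
    then have s2: "2 \<le> s" using s_def by simp
    have "last (butlast \<sigma>b) = \<sigma>b ! (s - 2)" using last_butlast_nth[of \<sigma>b] lsb s2 s_def by simp
    moreover have "last \<sigma> = \<sigma> ! (s - 1)" using ne s_def by (simp add: last_conv_nth)
    moreover have "Suc (s - 2) = s - 1" using s2 by simp
    ultimately show ?thesis using Vs[of "s-2"] s2 s_def by simp
  qed
  show ?thesis
  proof (cases "length ps' = length (butlast \<sigma>) \<and> length R = last \<sigma>")
    case False
    have "(ps'@[R], u, v, qs) \<notin> MS m n"
    proof
      assume "(ps'@[R], u, v, qs) \<in> MS m n"
      then have W: "WF (butlast \<sigma> @ [last \<sigma>]) (butlast \<sigma>b) (ps'@[R])"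
        unfolding MS_def Tup_def E_def using sig by simp
      then have "length ps' = length (butlast \<sigma>)" using WF_len by fastforce
      then have "rowok (last \<sigma>) R" using W WF_snoc[OF lbb] by simp
      then show False using False \<open>length ps' = length (butlast \<sigma>)\<close> unfolding rowok_def by simp
    qed
    moreover have "(ps', u@R, v, qs) \<notin> SM m n"
    proof
      assume a: "(ps', u@R, v, qs) \<in> SM m n"
      then have "length ps' = length (butlast \<sigma>)" unfolding SM_def using WF_len by fastforce
      moreover have "length R = last \<sigma>" using a lu unfolding SM_def rowok_def by simp
      ultimately show False using False by simp
    qed
    ultimately show ?thesis by simp
  next
    case True
    then have lp: "length ps' = length (butlast \<sigma>)" and lR: "length R = last \<sigma>" by auto
    have R: "R \<noteq> []" using lR ls by auto
    have W: "WF \<sigma> (butlast \<sigma>b) (ps'@[R]) \<longleftrightarrow> WF (butlast \<sigma>) (butlast (butlast \<sigma>b)) ps' \<and> rowok (last \<sigma>) R \<and>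
        (butlast \<sigma> \<noteq> [] \<longrightarrow> rel (last (butlast \<sigma>b)) (last ps') R)"
      using WF_snoc[OF lbb lp, of "last \<sigma>" R] sig by simp
    have RO: "rowok (m + last \<sigma>) (u@R) \<longleftrightarrow> rowok m u \<and> rowok (last \<sigma>) R \<and> last u \<le> R!0"
      by (rule rowok_app[OF lu u R])
    have NR: "\<not> rel 1 (last (ps'@[R])) u \<longleftrightarrow> last u \<le> R!0" using rel1_last[OF u] by auto
    have RG: "butlast \<sigma> \<noteq> [] \<Longrightarrow> rel (last (butlast \<sigma>b)) (last ps') (u@R) \<longleftrightarrow> rel (last (butlast \<sigma>b)) (last ps') R"
    proof -
      assume b: "butlast \<sigma> \<noteq> []"
      have gl: "last (butlast \<sigma>b) \<le> length R" using g[OF b] lR by simp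
      show ?thesis
        by (rule rel_cong_right) (use gl in \<open>auto simp: nth_append\<close>)
    qed
    have RM: "rel (m+1) (u@R) v \<longleftrightarrow> rel (m+1) (u @ [R!0]) v"
      by (rule rel_cong_left) (use lu R in \<open>auto simp: nth_append less_Suc_eq\<close>)
    show ?thesis
      unfolding MS_def Tup_def SM_def E_def
      using W RO NR RG RM LDq cn by auto
  qed
qed

lemma MS_ov:
  assumes ne: "\<sigma> \<noteq> []" and m: "1 \<le> m" "m + 1 \<le> n"
  shows "ov_schur (butlast \<sigma> @ [m + last \<sigma>, n] @ \<tau>) (butlast \<sigma>b @ [m+1] @ \<tau>b) c = int (card (MS m n))"
proof -
  have ls: "1 \<le> last \<sigma>" using pos_s ne by simp
  have lbb: "length (butlast \<sigma>b) = length (butlast \<sigma>)" using lsb by simp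
  have V: "valid (butlast \<sigma> @ [m + last \<sigma>, n] @ \<tau>) (butlast \<sigma>b @ [m+1] @ \<tau>b)"
  proof (rule valid_split[OF lbb ltb _ _ _ _ _ Vt])
    fix i assume "Suc i < length (butlast \<sigma>)"
    then show "butlast \<sigma>b ! i \<le> butlast \<sigma> ! i \<and> butlast \<sigma>b ! i \<le> butlast \<sigma> ! Suc i"
      using Vs[of i] lsb by (simp add: nth_butlast)
  next
    assume b: "butlast \<sigma> \<noteq> []"
    define s where "s = length \<sigma>"
    have "length (butlast \<sigma>) \<noteq> 0" using b by (metis length_0_conv)
    then have s2: "2 \<le> s" using s_def by simp
    have "last (butlast \<sigma>b) = \<sigma>b ! (s - 2)" using last_butlast_nth[of \<sigma>b] lsb s2 s_def by simp
    moreover have "last (butlast \<sigma>) = \<sigma> ! (s - 2)" using last_butlast_nth[of \<sigma>] s2 s_def by simp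
    moreover have "last \<sigma> = \<sigma> ! (s - 1)" using ne s_def by (simp add: last_conv_nth)
    moreover have "Suc (s - 2) = s - 1" using s2 by simp
    moreover have "Suc (s-2) < length \<sigma>" using s2 s_def by simp
    ultimately show "last (butlast \<sigma>b) \<le> last (butlast \<sigma>) \<and> last (butlast \<sigma>b) \<le> m + last \<sigma>"
      using Vs[of "s-2"] by simp
  next
    show "m + 1 \<le> m + last \<sigma>" using ls by simp
    show "m + 1 \<le> n" using m by simp
  next
    assume nt: "\<tau> \<noteq> []"
    have "1 \<le> hd \<tau>" using pos_t nt by simp
    then show "hd \<tau>b \<le> n \<and> hd \<tau>b \<le> hd \<tau>" using hdtb[OF nt] m by simp
  qed
  have c1: "ov_schur (butlast \<sigma> @ [m + last \<sigma>, n] @ \<tau>) (butlast \<sigma>b @ [m+1] @ \<tau>b) c = int (card (SM m n))"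
    using ov_schur_card[OF V] split_card[OF lbb ltb, of "m + last \<sigma>" n "m+1" c] unfolding SM_def by simp
  have "card (SM m n) = card (MS m n)"
  proof (rule bij_betw_same_card[of "\<lambda>(ps',MR,v,qs). (ps'@[drop m MR], take m MR, v, qs)"],
         rule bij_betw_byWitness[where f'="\<lambda>(ps,u,v,qs). (butlast ps, u @ last ps, v, qs)"])
    show "\<forall>a\<in>SM m n. (\<lambda>(ps,u,v,qs). (butlast ps, u @ last ps, v, qs)) ((\<lambda>(ps',MR,v,qs). (ps'@[drop m MR], take m MR, v, qs)) a) = a"
      by auto
    show "\<forall>a'\<in>MS m n. (\<lambda>(ps',MR,v,qs). (ps'@[drop m MR], take m MR, v, qs)) ((\<lambda>(ps,u,v,qs). (butlast ps, u @ last ps, v, qs)) a') = a'"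
    proof
      fix z assume z: "z \<in> MS m n"
      obtain ps u v qs where zz: "z = (ps,u,v,qs)" by (cases z) blast
      have "length u = m" "ps \<noteq> []" using z zz unfolding MS_def Tup_def rowok_def by auto
      then show "(\<lambda>(ps',MR,v,qs). (ps'@[drop m MR], take m MR, v, qs)) ((\<lambda>(ps,u,v,qs). (butlast ps, u @ last ps, v, qs)) z) = z"
        using zz by simp
    qed
    show "(\<lambda>(ps',MR,v,qs). (ps'@[drop m MR], take m MR, v, qs)) ` SM m n \<subseteq> MS m n"
    proof (rule image_subsetI)
      fix z assume z: "z \<in> SM m n"
      obtain ps' MR v qs where zz: "z = (ps',MR,v,qs)" by (cases z) blast
      have l: "length MR = m + last \<sigma>" using z zz unfolding SM_def rowok_def by auto
      have lt: "length (take m MR) = m" using l by simp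
      have "(ps', take m MR @ drop m MR, v, qs) \<in> SM m n" using z zz by simp
      then show "(\<lambda>(ps',MR,v,qs). (ps'@[drop m MR], take m MR, v, qs)) z \<in> MS m n"
        using MS_pt[OF ne m(1) lt, of ps' "drop m MR" v qs] zz by simp
    qed
    show "(\<lambda>(ps,u,v,qs). (butlast ps, u @ last ps, v, qs)) ` MS m n \<subseteq> SM m n"
    proof (rule image_subsetI)
      fix z assume z: "z \<in> MS m n"
      obtain ps u v qs where zz: "z = (ps,u,v,qs)" by (cases z) blast
      have l: "length u = m" "ps \<noteq> []" using z zz unfolding MS_def Tup_def rowok_def by auto
      have "(butlast ps @ [last ps], u, v, qs) \<in> MS m n" using z zz l by simp
      then show "(\<lambda>(ps,u,v,qs). (butlast ps, u @ last ps, v, qs)) z \<in> SM m n"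
        using MS_pt[OF ne m(1) l(1), of "butlast ps" "last ps" v qs] zz by simp
    qed
  qed
  then show ?thesis using c1 by simp
qed

lemma MS_empty: "\<sigma> = [] \<Longrightarrow> MS m n = {}"
  unfolding MS_def Tup_def using E_ne by auto


definition ST :: "nat \<Rightarrow> nat \<Rightarrow> _" where
  "ST m n = {(ps,u,v,qs). WF \<sigma> (butlast \<sigma>b) ps \<and> WF (tl \<tau>) (tl (tl \<tau>b)) qs \<and> rowok (m+1) u \<and> rowok (n - 1 + hd \<tau>) v \<and>
    (\<sigma> \<noteq> [] \<longrightarrow> rel (last \<sigma>b) (last ps) u) \<and> rel n u v \<and> (tl \<tau> \<noteq> [] \<longrightarrow> rel (hd (tl \<tau>b)) v (hd qs)) \<and>
    count (cnt4 ps u v qs) = c}"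

lemma MT_pt:
  assumes ne: "\<tau> \<noteq> []" and n: "2 \<le> n" and lT: "length T = hd \<tau>"
  shows "(ps, u, v, T # qs') \<in> MT m n \<longleftrightarrow> (ps, u, T @ v, qs') \<in> ST m n"
proof -
  have lt: "1 \<le> hd \<tau>" using pos_t ne by simp
  have tau: "\<tau> = hd \<tau> # tl \<tau>" using ne by simp
  have ltt: "length (tl \<tau>b) = length (tl \<tau>)" using ltb by simp
  have T: "T \<noteq> []" using lT lt by auto
  have LUp: "WF \<sigma> (butlast \<sigma>b) ps \<Longrightarrow> LU ps u = (\<sigma> \<noteq> [] \<longrightarrow> rel (last \<sigma>b) (last ps) u)"
    unfolding LU_def using WF_len[of \<sigma> "butlast \<sigma>b" ps] lastsb by fastforce
  have cn: "cnt4 ps u v (T # qs') = cnt4 ps u (T @ v) qs'" unfolding cnt4_def by (simp add: ac_simps)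
  have g: "tl \<tau> \<noteq> [] \<Longrightarrow> hd (tl \<tau>b) \<le> hd \<tau>"
  proof -
    assume b: "tl \<tau> \<noteq> []"
    then have "1 < length \<tau>" using ne by (cases \<tau>) auto
    then have l1: "1 < length \<tau>" .
    then have "\<tau>b!1 \<le> \<tau>!0" using Vt[of 1] by simp
    moreover have "hd (tl \<tau>b) = \<tau>b!1"
    proof -
      have "tl \<tau>b \<noteq> []" using l1 ltb by (metis length_tl less_numeral_extra(3) list.size(3) zero_less_diff)
      then show ?thesis by (cases \<tau>b) (auto simp: hd_conv_nth)
    qed
    moreover have "hd \<tau> = \<tau>!0" using ne by (simp add: hd_conv_nth)
    ultimately show ?thesis by simp
  qed
  show ?thesis
  proof (cases "length qs' = length (tl \<tau>) \<and> length v = n - 1")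
    case False
    have "(ps, u, v, T # qs') \<notin> MT m n"
    proof
      assume a: "(ps, u, v, T # qs') \<in> MT m n"
      then have W: "WF (hd \<tau> # tl \<tau>) (tl \<tau>b) (T # qs')"
        unfolding MT_def Tup_def E_def using tau by simp
      then have "length qs' = length (tl \<tau>)" using WF_len by fastforce
      moreover have "length v = n - 1" using a unfolding MT_def Tup_def rowok_def by simp
      ultimately show False using False by simp
    qed
    moreover have "(ps, u, T @ v, qs') \<notin> ST m n"
    proof
      assume a: "(ps, u, T @ v, qs') \<in> ST m n"
      then have "length qs' = length (tl \<tau>)" unfolding ST_def using WF_len by fastforce
      moreover have "length v = n - 1" using a lT unfolding ST_def rowok_def by simp
      ultimately show False using False by simp
    qed
    ultimately show ?thesis by simp
  next
    case True
    then have lq: "length qs' = length (tl \<tau>)" and lv: "length v = n - 1" by auto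
    have v: "v \<noteq> []" using lv n by auto
    have W: "WF \<tau> (tl \<tau>b) (T # qs') \<longleftrightarrow> rowok (hd \<tau>) T \<and> WF (tl \<tau>) (tl (tl \<tau>b)) qs' \<and>
        (tl \<tau> \<noteq> [] \<longrightarrow> rel (hd (tl \<tau>b)) T (hd qs'))"
      using WF_cons[OF ltt lq, of "hd \<tau>" T] tau by simp
    have RO: "rowok (n - 1 + hd \<tau>) (T @ v) \<longleftrightarrow> rowok (hd \<tau>) T \<and> rowok (n-1) v \<and> last T \<le> v!0"
      using rowok_app[OF lT T v, of "n-1"] by (simp add: add.commute)
    have NR: "\<not> rel 1 v (hd (T # qs')) \<longleftrightarrow> last T \<le> v!0"
      using rel1_hd[OF v, of T] T v by (simp add: hd_conv_nth last_conv_nth not_less)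
    have RG: "tl \<tau> \<noteq> [] \<Longrightarrow> rel (hd (tl \<tau>b)) (T @ v) (hd qs') \<longleftrightarrow> rel (hd (tl \<tau>b)) T (hd qs')"
    proof -
      assume b: "tl \<tau> \<noteq> []"
      have gl: "hd (tl \<tau>b) \<le> length T" using g[OF b] lT by simp
      show ?thesis
        unfolding rel_def using gl by (auto simp: nth_append)
    qed
    have RM: "rel n u (T @ v) \<longleftrightarrow> rel n u (lastT (T # qs') # v)"
    proof (rule rel_cong_right)
      fix k assume k: "k < n"
      show "(T @ v) ! (k + length (T @ v) - n) = (lastT (T # qs') # v) ! (k + length (lastT (T # qs') # v) - n)"
      proof (cases k)
        case 0
        then show ?thesis using lT lv n T lt unfolding lastT_def by (simp add: nth_append)
      next
        case (Suc j)
        then show ?thesis using lT lv n T k by (simp add: nth_append)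
      qed
    qed
    show ?thesis
      unfolding MT_def Tup_def ST_def E_def
      using W RO NR RG RM LUp cn by auto
  qed
qed

lemma MT_ov:
  assumes ne: "\<tau> \<noteq> []" and m: "1 \<le> m" "2 \<le> n" "n \<le> m + 1"
  shows "ov_schur (\<sigma> @ [m + 1, n - 1 + hd \<tau>] @ tl \<tau>) (\<sigma>b @ [n] @ tl \<tau>b) c = int (card (MT m n))"
proof -
  have lt: "1 \<le> hd \<tau>" using pos_t ne by simp
  have ltt: "length (tl \<tau>b) = length (tl \<tau>)" using ltb by simp
  have V: "valid (\<sigma> @ [m + 1, n - 1 + hd \<tau>] @ tl \<tau>) (\<sigma>b @ [n] @ tl \<tau>b)"
  proof (rule valid_split[OF lsb ltt Vs])
    assume ns: "\<sigma> \<noteq> []"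
    have "1 \<le> last \<sigma>" using pos_s ns by simp
    then show "last \<sigma>b \<le> last \<sigma> \<and> last \<sigma>b \<le> m + 1" using lastsb[OF ns] by simp
  next
    show "n \<le> m + 1" using m by simp
    show "n \<le> n - 1 + hd \<tau>" using lt m by simp
  next
    assume b: "tl \<tau> \<noteq> []"
    then have l1: "1 < length \<tau>" using ne by (cases \<tau>) auto
    then have "\<tau>b!1 \<le> \<tau>!1 \<and> \<tau>b!1 \<le> \<tau>!0" using Vt[of 1] by simp
    moreover have "hd (tl \<tau>b) = \<tau>b!1"
    proof -
      have "tl \<tau>b \<noteq> []" using l1 ltb by (metis length_tl less_numeral_extra(3) list.size(3) zero_less_diff)
      then show ?thesis by (cases \<tau>b) (auto simp: hd_conv_nth)
    qed
    moreover have "hd (tl \<tau>) = \<tau>!1" using b by (cases \<tau>) (auto simp: hd_conv_nth)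
    moreover have "hd \<tau> = \<tau>!0" using ne by (simp add: hd_conv_nth)
    ultimately show "hd (tl \<tau>b) \<le> n - 1 + hd \<tau> \<and> hd (tl \<tau>b) \<le> hd (tl \<tau>)" by simp
  next
    fix i assume i: "0 < i" "i < length (tl \<tau>)"
    then have "Suc i < length \<tau>" by simp
    then have "\<tau>b!Suc i \<le> \<tau>!Suc i \<and> \<tau>b!Suc i \<le> \<tau>!i" using Vt[of "Suc i"] by simp
    moreover have "tl \<tau> ! (i - 1) = \<tau> ! i" using i by (simp add: nth_tl)
    ultimately show "tl \<tau>b ! i \<le> tl \<tau> ! i \<and> tl \<tau>b ! i \<le> tl \<tau> ! (i - 1)" using i ltb by (simp add: nth_tl)
  qed
  have c1: "ov_schur (\<sigma> @ [m + 1, n - 1 + hd \<tau>] @ tl \<tau>) (\<sigma>b @ [n] @ tl \<tau>b) c = int (card (ST m n))"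
    using ov_schur_card[OF V] split_card[OF lsb ltt, of "m + 1" "n - 1 + hd \<tau>" n c] unfolding ST_def by simp
  have "card (ST m n) = card (MT m n)"
  proof (rule bij_betw_same_card[of "\<lambda>(ps,u,MR,qs). (ps, u, drop (hd \<tau>) MR, take (hd \<tau>) MR # qs)"],
         rule bij_betw_byWitness[where f'="\<lambda>(ps,u,v,qs). (ps, u, hd qs @ v, tl qs)"])
    show "\<forall>a\<in>ST m n. (\<lambda>(ps,u,v,qs). (ps, u, hd qs @ v, tl qs)) ((\<lambda>(ps,u,MR,qs). (ps, u, drop (hd \<tau>) MR, take (hd \<tau>) MR # qs)) a) = a"
      by auto
    show "\<forall>a'\<in>MT m n. (\<lambda>(ps,u,MR,qs). (ps, u, drop (hd \<tau>) MR, take (hd \<tau>) MR # qs)) ((\<lambda>(ps,u,v,qs). (ps, u, hd qs @ v, tl qs)) a') = a'"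
    proof
      fix z assume z: "z \<in> MT m n"
      obtain ps u v qs where zz: "z = (ps,u,v,qs)" by (cases z) blast
      have q: "qs \<noteq> []" and E: "E ps qs" using z zz unfolding MT_def Tup_def by auto
      have "length (hd qs) = hd \<tau>"
      proof -
        have "WF (hd \<tau> # tl \<tau>) (tl \<tau>b) (hd qs # tl qs)" using E q ne unfolding E_def by simp
        moreover have "length (tl qs) = length (tl \<tau>)" using E_len[OF E] by simp
        ultimately show ?thesis using WF_cons[OF ltt] unfolding rowok_def by blast
      qed
      then show "(\<lambda>(ps,u,MR,qs). (ps, u, drop (hd \<tau>) MR, take (hd \<tau>) MR # qs)) ((\<lambda>(ps,u,v,qs). (ps, u, hd qs @ v, tl qs)) z) = z"
        using zz q by simp
    qed
    show "(\<lambda>(ps,u,MR,qs). (ps, u, drop (hd \<tau>) MR, take (hd \<tau>) MR # qs)) ` ST m n \<subseteq> MT m n"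
    proof (rule image_subsetI)
      fix z assume z: "z \<in> ST m n"
      obtain ps u MR qs where zz: "z = (ps,u,MR,qs)" by (cases z) blast
      have l: "length MR = n - 1 + hd \<tau>" using z zz unfolding ST_def rowok_def by auto
      have lt2: "length (take (hd \<tau>) MR) = hd \<tau>" using l by simp
      have "(ps, u, take (hd \<tau>) MR @ drop (hd \<tau>) MR, qs) \<in> ST m n" using z zz by simp
      then show "(\<lambda>(ps,u,MR,qs). (ps, u, drop (hd \<tau>) MR, take (hd \<tau>) MR # qs)) z \<in> MT m n"
        using MT_pt[OF ne m(2) lt2, of ps u "drop (hd \<tau>) MR" qs] zz by simp
    qed
    show "(\<lambda>(ps,u,v,qs). (ps, u, hd qs @ v, tl qs)) ` MT m n \<subseteq> ST m n"
    proof (rule image_subsetI)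
      fix z assume z: "z \<in> MT m n"
      obtain ps u v qs where zz: "z = (ps,u,v,qs)" by (cases z) blast
      have q: "qs \<noteq> []" and E: "E ps qs" using z zz unfolding MT_def Tup_def by auto
      have lh: "length (hd qs) = hd \<tau>"
      proof -
        have "WF (hd \<tau> # tl \<tau>) (tl \<tau>b) (hd qs # tl qs)" using E q ne unfolding E_def by simp
        moreover have "length (tl qs) = length (tl \<tau>)" using E_len[OF E] by simp
        ultimately show ?thesis using WF_cons[OF ltt] unfolding rowok_def by blast
      qed
      have "(ps, u, v, hd qs # tl qs) \<in> MT m n" using z zz q by simp
      then show "(\<lambda>(ps,u,v,qs). (ps, u, hd qs @ v, tl qs)) z \<in> ST m n"
        using MT_pt[OF ne m(2) lh, of ps u v "tl qs"] zz by simp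
    qed
  qed
  then show ?thesis using c1 by simp
qed

lemma MT_empty: "\<tau> = [] \<Longrightarrow> MT m n = {}"
  unfolding MT_def Tup_def using E_ne by auto


lemma main:
  assumes m: "1 \<le> m" and n: "2 \<le> n" and x: "x \<le> min m (n - 1)"
  shows "ov_schur (\<sigma> @ [m, n] @ \<tau>) (\<sigma>b @ [x] @ \<tau>b) c
             - ov_schur (\<sigma> @ [m + 1, n - 1] @ \<tau>) (\<sigma>b @ [x] @ \<tau>b) c
           = (if x < m then ov_schur (\<sigma> @ [m, n] @ \<tau>) (\<sigma>b @ [x + 1] @ \<tau>b) c
              else if \<sigma> = [] then 0
              else - ov_schur (butlast \<sigma> @ [m + last \<sigma>, n] @ \<tau>)
                              (butlast \<sigma>b @ [m + 1] @ \<tau>b) c)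
           - (if x < n - 1 then ov_schur (\<sigma> @ [m + 1, n - 1] @ \<tau>) (\<sigma>b @ [x + 1] @ \<tau>b) c
              else if \<tau> = [] then 0
              else - ov_schur (\<sigma> @ [m + 1, n - 1 + hd \<tau>] @ tl \<tau>)
                              (\<sigma>b @ [n] @ tl \<tau>b) c)"
proof -
  have xm: "x \<le> m" and xn: "x \<le> n - 1" using x by auto
  have L1: "ov_schur (\<sigma> @ [m, n] @ \<tau>) (\<sigma>b @ [x] @ \<tau>b) c = int (card (F m n x))"
    using F_ov[of m n x] m n xm xn by simp
  have L2: "ov_schur (\<sigma> @ [m + 1, n - 1] @ \<tau>) (\<sigma>b @ [x] @ \<tau>b) c = int (card (F (m+1) (n-1) x))"
    using F_ov[of "m+1" "n-1" x] m n xm xn by simp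
  have KK: "int (card (F m n x)) - int (card (F (m+1) (n-1) x)) = int (card (All m n)) - int (card (All (m+1) (n-1)))"
    using K[OF m n xm xn] .
  define A where "A = (if x < m then ov_schur (\<sigma> @ [m, n] @ \<tau>) (\<sigma>b @ [x + 1] @ \<tau>b) c
              else if \<sigma> = [] then 0
              else - ov_schur (butlast \<sigma> @ [m + last \<sigma>, n] @ \<tau>) (butlast \<sigma>b @ [m + 1] @ \<tau>b) c)"
  define B where "B = (if x < n - 1 then ov_schur (\<sigma> @ [m + 1, n - 1] @ \<tau>) (\<sigma>b @ [x + 1] @ \<tau>b) c
              else if \<tau> = [] then 0
              else - ov_schur (\<sigma> @ [m + 1, n - 1 + hd \<tau>] @ tl \<tau>) (\<sigma>b @ [n] @ tl \<tau>b) c)"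
  have A1: "x < m \<Longrightarrow> A = int (card (F m n (x+1)))"
    unfolding A_def using F_ov[of m n "x+1"] m n xn by simp
  have A2: "x = m \<Longrightarrow> A = - int (card (MS m n))"
  proof -
    assume e: "x = m"
    show ?thesis
    proof (cases "\<sigma> = []")
      case True then show ?thesis unfolding A_def using e MS_empty by simp
    next
      case False then show ?thesis unfolding A_def using e MS_ov[OF False m] xn n by simp
    qed
  qed
  have B1: "x < n - 1 \<Longrightarrow> B = int (card (F (m+1) (n-1) (x+1)))"
    unfolding B_def using F_ov[of "m+1" "n-1" "x+1"] m n xm by simp
  have B2: "x = n - 1 \<Longrightarrow> B = - int (card (MT m n))"
  proof -
    assume e: "x = n - 1"
    show ?thesis
    proof (cases "\<tau> = []")
      case True then show ?thesis unfolding B_def using e MT_empty n by simp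
    next
      case False then show ?thesis unfolding B_def using e MT_ov[OF False m n] xm n by simp
    qed
  qed
  have goal: "int (card (All m n)) - int (card (All (m+1) (n-1))) = A - B"
  proof (cases "x < m")
    case True
    note xlm = True
    show ?thesis
    proof (cases "x < n - 1")
      case True
      have "int (card (F m n (x+1))) - int (card (F (m+1) (n-1) (x+1))) = int (card (All m n)) - int (card (All (m+1) (n-1)))"
        using K[OF m n, of "x+1"] xlm True by simp
      then show ?thesis using A1[OF xlm] B1[OF True] by simp
    next
      case False
      then have e: "x = n - 1" using xn by simp
      have s1: "card (All m n) = card (F m n n) + card (Bad m n n)" by (rule All_split)
      have s2: "card (Bad m n n) = card (PQ (m+n-n+1) (n-1))" using Bad_PQ[of n m n] n xlm e by simp
      have s3: "card (PQ (m+1) (n-1)) = card (All (m+1) (n-1)) + card (MT m n)" using TAU[OF m n] xlm e by simp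
      have A: "A = int (card (F m n n))" using A1[OF xlm] e n by simp
      show ?thesis using A B2[OF e] s1 s2 s3 by simp
    qed
  next
    case False
    then have e: "x = m" using xm by simp
    show ?thesis
    proof (cases "x < n - 1")
      case True
      have s1: "card (All (m+1) (n-1)) = card (F (m+1) (n-1) (m+1)) + card (Bad (m+1) (n-1) (m+1))" by (rule All_split)
      have s2: "card (Bad (m+1) (n-1) (m+1)) = card (PQ ((m+1)+(n-1)-(m+1)+1) m)" using Bad_PQ[of "m+1" "m+1" "n-1"] True e by simp
      have s2': "(m+1)+(n-1)-(m+1)+1 = n" using n by simp
      have s3: "card (All m n) + card (MS m n) = card (PQ n m)" using SIG[OF m] True e by simp
      have B: "B = int (card (F (m+1) (n-1) (m+1)))" using B1[OF True] e by simp
      show ?thesis using A2[OF e] B s1 s2 s2' s3 by simp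
    next
      case False
      then have e2: "x = n - 1" using xn by simp
      have s3: "card (All m n) + card (MS m n) = card (PQ n m)" using SIG[OF m] e e2 n by simp
      have s4: "card (PQ (m+1) (n-1)) = card (All (m+1) (n-1)) + card (MT m n)" using TAU[OF m n] e e2 by simp
      have "n = m + 1" using e e2 n by simp
      then have "PQ n m = PQ (m+1) (n-1)" by simp
      then show ?thesis using A2[OF e] B2[OF e2] s3 s4 by simp
    qed
  qed
  show ?thesis using L1 L2 KK goal unfolding A_def B_def by simp
qed

end


theorem lemma2p2:
  fixes \<sigma> \<tau> \<sigma>b \<tau>b :: "nat list" and m n x :: nat
  assumes "standing_hyp \<sigma> \<tau> \<sigma>b \<tau>b"
    and "1 \<le> m" and "2 \<le> n" and "x \<le> min m (n - 1)"
  shows "\<forall>c. ov_schur (\<sigma> @ [m, n] @ \<tau>) (\<sigma>b @ [x] @ \<tau>b) c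
             - ov_schur (\<sigma> @ [m + 1, n - 1] @ \<tau>) (\<sigma>b @ [x] @ \<tau>b) c
           = (if x < m then ov_schur (\<sigma> @ [m, n] @ \<tau>) (\<sigma>b @ [x + 1] @ \<tau>b) c
              else if \<sigma> = [] then 0
              else - ov_schur (butlast \<sigma> @ [m + last \<sigma>, n] @ \<tau>)
                              (butlast \<sigma>b @ [m + 1] @ \<tau>b) c)
           - (if x < n - 1 then ov_schur (\<sigma> @ [m + 1, n - 1] @ \<tau>) (\<sigma>b @ [x + 1] @ \<tau>b) c
              else if \<tau> = [] then 0
              else - ov_schur (\<sigma> @ [m + 1, n - 1 + hd \<tau>] @ tl \<tau>)
                              (\<sigma>b @ [n] @ tl \<tau>b) c)"
proof
  fix c
  interpret LS \<sigma> \<tau> \<sigma>b \<tau>b c using assms(1) by unfold_locales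
  show "ov_schur (\<sigma> @ [m, n] @ \<tau>) (\<sigma>b @ [x] @ \<tau>b) c
             - ov_schur (\<sigma> @ [m + 1, n - 1] @ \<tau>) (\<sigma>b @ [x] @ \<tau>b) c
           = (if x < m then ov_schur (\<sigma> @ [m, n] @ \<tau>) (\<sigma>b @ [x + 1] @ \<tau>b) c
              else if \<sigma> = [] then 0
              else - ov_schur (butlast \<sigma> @ [m + last \<sigma>, n] @ \<tau>)
                              (butlast \<sigma>b @ [m + 1] @ \<tau>b) c)
           - (if x < n - 1 then ov_schur (\<sigma> @ [m + 1, n - 1] @ \<tau>) (\<sigma>b @ [x + 1] @ \<tau>b) c
              else if \<tau> = [] then 0
              else - ov_schur (\<sigma> @ [m + 1, n - 1 + hd \<tau>] @ tl \<tau>)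
                              (\<sigma>b @ [n] @ tl \<tau>b) c)"
    using main[OF assms(2,3,4)] .
qed

end
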